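(* Let $\alpha\in\mathbb N^n$ and let $P\subset\mathbb Z^n_+$ be a discrete polymatroid. If the toric ideal $I_P$ is generated by quadratic binomials corresponding to double swaps, then $I_{P^\alpha}$ is also generated by quadratic binomials corresponding to double swaps.
   Context: $K$ is a field, $\mathbb N$ the positive integers, $\mathbb Z^n_+$ the nonnegative integer vectors; $\mathbf u\preceq\mathbf v$ means componentwise $\le$, $\epsilon_i$ is the $i$th unit vector, $|\mathbf u|=\sum_i\mathbf u(i)$. A discrete polymatroid on $[n]$ is a nonempty finite set $P\subset\mathbb Z^n_+$ such that (D1) if $\mathbf v\in\mathbb Z^n_+$, $\mathbf v\preceq\mathbf u$ for some $\mathbf u\in P$, then $\mathbf v\in P$; (D2) if $\mathbf u,\mathbf v\in P$ with $|\mathbf u|<|\mathbf v|$ then there is $i$ with $\mathbf u(i)<\mathbf v(i)$ and $\mathbf u+\epsilon_i\in P$. A base of $P$ is a $\preceq$-maximal element; $\mathcal B_P$ is the set of bases. $S_P=K[y_{\mathbf u}:\mathbf u\in\mathcal B_P]$, $K[P]=K[\mathbf x^{\mathbf u}:\mathbf u\in\mathcal B_P]$ with $\mathbf x^{\mathbf u}=x_1^{\mathbf u(1)}\cdots x_n^{\mathbf u(n)}$, and $I_P=\ker(S_P\to K[P],\ y_{\mathbf u}\mapsto\mathbf x^{\mathbf u})$. A pair of bases $(\mathbf v_1,\mathbf v_2)$ is obtained from a pair of bases $(\mathbf u_1,\mathbf u_2)$ by a double swap if $\mathbf v_1=\mathbf u_1+\epsilon_j-\epsilon_i$ and $\mathbf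 v_2=\mathbf u_2+\epsilon_i-\epsilon_j$ for some $i,j$ with $\mathbf u_1(i)>\mathbf u_2(i)$ and $\mathbf u_2(j)>\mathbf u_1(j)$; the corresponding quadratic binomial is $y_{\mathbf u_1}y_{\mathbf u_2}-y_{\mathbf v_1}y_{\mathbf v_2}$. For $\alpha=(k_1,\ldots,k_n)$, index coordinates of $\mathbb Z^{|\alpha|}$ by pairs $(i,j)$, $1\le j\le k_i$, let $\pi_0:\mathbb Z^{|\alpha|}\to\mathbb Z^n$, $\pi_0(\mathbf w)(i)=\sum_j\mathbf w(i,j)$, and for $\mathbf u\in\mathbb Z^n_+$ let $\mathbf u^\alpha=\{\mathbf w\in\mathbb Z^{|\alpha|}_+:\pi_0(\mathbf w)=\mathbf u\}$. $P^\alpha\subset\mathbb Z^{|\alpha|}_+$ is the discrete polymatroid with set of bases $\mathcal B_{P^\alpha}=\bigcup_{\mathbf u\in\mathcal B_P}\mathbf u^\alpha$, and $I_{P^\alpha}$ is its toric ideal defined analogously. *)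

theory Defs
  imports Main "HOL-Library.Poly_Mapping"
begin

(* Vectors in Z^n_+ are finitely supported functions 'i \<Rightarrow>\<^sub>0 nat whose support
  lies in a ground set E. Componentwise order is written via Poly_Mapping.lookup. *)

definition unit_vec :: "'i \<Rightarrow> ('i \<Rightarrow>\<^sub>0 nat)" where
  "unit_vec i = Poly_Mapping.single i 1"

definition vec_size :: "('i \<Rightarrow>\<^sub>0 nat) \<Rightarrow> nat" where
  "vec_size u = (\<Sum>i\<in>Poly_Mapping.keys u. Poly_Mapping.lookup u i)"

definition discrete_polymatroid :: "'i set \<Rightarrow> ('i \<Rightarrow>\<^sub>0 nat) set \<Rightarrow> bool" where
  "discrete_polymatroid E P \<longleftrightarrow>
     P \<noteq> {} \<and> finite P \<and> (\<forall>u\<in>P. Poly_Mapping.keys u \<subseteq> E) \<and>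
     (\<forall>u\<in>P. \<forall>v. Poly_Mapping.keys v \<subseteq> E \<and> (\<forall>i. Poly_Mapping.lookup v i \<le> Poly_Mapping.lookup u i) \<longrightarrow> v \<in> P) \<and>
     (\<forall>u\<in>P. \<forall>v\<in>P. vec_size u < vec_size v \<longrightarrow>
        (\<exists>i. Poly_Mapping.lookup u i < Poly_Mapping.lookup v i \<and> u + unit_vec i \<in> P))"

definition bases :: "('i \<Rightarrow>\<^sub>0 nat) set \<Rightarrow> ('i \<Rightarrow>\<^sub>0 nat) set" where
  "bases P = {u\<in>P. \<forall>v\<in>P. (\<forall>i. Poly_Mapping.lookup u i \<le> Poly_Mapping.lookup v i) \<longrightarrow> v = u}"

(* Polynomials over K in variables y_u (u a vector): monomials are
  ('i =>0 nat) =>0 nat, polynomials are finitely supported maps from monomials to K. *)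

type_synonym ('i,'k) ypoly = "(('i \<Rightarrow>\<^sub>0 nat) \<Rightarrow>\<^sub>0 nat) \<Rightarrow>\<^sub>0 'k"

definition yvar :: "('i \<Rightarrow>\<^sub>0 nat) \<Rightarrow> ('i,'k::comm_ring_1) ypoly" where
  "yvar u = Poly_Mapping.single (Poly_Mapping.single u 1) 1"

definition xmono :: "('i \<Rightarrow>\<^sub>0 nat) \<Rightarrow> ('i \<Rightarrow>\<^sub>0 nat) \<Rightarrow>\<^sub>0 'k::comm_ring_1" where
  "xmono u = Poly_Mapping.single u 1"

definition poly_ring :: "('i \<Rightarrow>\<^sub>0 nat) set \<Rightarrow> ('i,'k::comm_ring_1) ypoly set" where
  "poly_ring B = {p. \<forall>m\<in>Poly_Mapping.keys p. Poly_Mapping.keys m \<subseteq> B}"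

(* The K-algebra homomorphism y_u \<mapsto> x^u (evaluation of p). *)
definition toric_map :: "('i,'k::comm_ring_1) ypoly \<Rightarrow> ('i \<Rightarrow>\<^sub>0 nat) \<Rightarrow>\<^sub>0 'k" where
  "toric_map p = (\<Sum>m\<in>Poly_Mapping.keys p. Poly_Mapping.single 0 (Poly_Mapping.lookup p m) *
                     (\<Prod>u\<in>Poly_Mapping.keys m. (xmono u) ^ (Poly_Mapping.lookup m u)))"

definition toric_ideal :: "('i \<Rightarrow>\<^sub>0 nat) set \<Rightarrow> ('i,'k::comm_ring_1) ypoly set" where
  "toric_ideal B = {p \<in> poly_ring B. toric_map p = 0}"

definition gen_ideal :: "'a::comm_ring_1 set \<Rightarrow> 'a set \<Rightarrow> 'a set" where
  "gen_ideal R G = {p. \<exists>F r. finite F \<and> F \<subseteq> G \<and> (\<forall>g\<in>F. r g \<in> R) \<and> p = (\<Sum>g\<in>F. r g * g)}"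

definition double_swap :: "('i \<Rightarrow>\<^sub>0 nat) set \<Rightarrow> ('i \<Rightarrow>\<^sub>0 nat) \<Rightarrow> ('i \<Rightarrow>\<^sub>0 nat)
     \<Rightarrow> ('i \<Rightarrow>\<^sub>0 nat) \<Rightarrow> ('i \<Rightarrow>\<^sub>0 nat) \<Rightarrow> bool" where
  "double_swap B u1 u2 v1 v2 \<longleftrightarrow> u1 \<in> B \<and> u2 \<in> B \<and> v1 \<in> B \<and> v2 \<in> B \<and>
     (\<exists>i j. Poly_Mapping.lookup u1 i > Poly_Mapping.lookup u2 i \<and> Poly_Mapping.lookup u2 j > Poly_Mapping.lookup u1 j \<and>
            v1 + unit_vec i = u1 + unit_vec j \<and> v2 + unit_vec j = u2 + unit_vec i)"

definition double_swap_binomials :: "('i \<Rightarrow>\<^sub>0 nat) set \<Rightarrow> ('i,'k::comm_ring_1) ypoly set" where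
  "double_swap_binomials B =
     {yvar u1 * yvar u2 - yvar v1 * yvar v2 | u1 u2 v1 v2. double_swap B u1 u2 v1 v2}"

definition generated_by_double_swaps :: "('i \<Rightarrow>\<^sub>0 nat) set \<Rightarrow> 'k::field itself \<Rightarrow> bool" where
  "generated_by_double_swaps B (_::'k itself) \<longleftrightarrow>
     (toric_ideal B :: ('i,'k) ypoly set) = gen_ideal (poly_ring B) (double_swap_binomials B)"

definition lift_ground :: "nat \<Rightarrow> (nat \<Rightarrow> nat) \<Rightarrow> (nat \<times> nat) set" where
  "lift_ground n \<alpha> = {(i,j). 1 \<le> i \<and> i \<le> n \<and> 1 \<le> j \<and> j \<le> \<alpha> i}"

definition lift_vec :: "nat \<Rightarrow> (nat \<Rightarrow> nat) \<Rightarrow> (nat \<Rightarrow>\<^sub>0 nat) \<Rightarrow> ((nat \<times> nat) \<Rightarrow>\<^sub>0 nat) set" where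
  "lift_vec n \<alpha> u = {w. Poly_Mapping.keys w \<subseteq> lift_ground n \<alpha> \<and>
       (\<forall>i\<in>{1..n}. (\<Sum>j\<in>{1..\<alpha> i}. Poly_Mapping.lookup w (i,j)) = Poly_Mapping.lookup u i)}"

definition lift_bases :: "nat \<Rightarrow> (nat \<Rightarrow> nat) \<Rightarrow> (nat \<Rightarrow>\<^sub>0 nat) set \<Rightarrow> ((nat \<times> nat) \<Rightarrow>\<^sub>0 nat) set" where
  "lift_bases n \<alpha> P = (\<Union>u\<in>bases P. lift_vec n \<alpha> u)"

end

theory Submission
  imports Defs "HOL-Library.Multiset"
begin



abbreviation (input) lookup where "lookup \<equiv> Poly_Mapping.lookup"
abbreviation (input) keys where "keys \<equiv> Poly_Mapping.keys"

lemma pm_expand: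
  "(p::'a \<Rightarrow>\<^sub>0 'b::comm_monoid_add) = (\<Sum>m\<in>Poly_Mapping.keys p. Poly_Mapping.single m (Poly_Mapping.lookup p m))"
proof (rule poly_mapping_eqI)
  fix k
  show "lookup p k = lookup (\<Sum>m\<in>keys p. Poly_Mapping.single m (lookup p m)) k"
    by (auto simp: lookup_sum lookup_single when_def in_keys_iff)
qed

lemma sum_keys_superset:
  assumes "finite S" "Poly_Mapping.keys p \<subseteq> S" "\<And>m. G m 0 = 0"
  shows "(\<Sum>m\<in>Poly_Mapping.keys p. G m (lookup p m)) = (\<Sum>m\<in>S. G m (lookup p m))"
  by (rule sum.mono_neutral_left) (use assms in \<open>auto simp: in_keys_iff\<close>)

definition nsc :: "nat \<Rightarrow> 'a \<Rightarrow> 'a::comm_monoid_add" where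
  "nsc k u = (\<Sum>_\<in>{..<k}. u)"

lemma nsc_0[simp]: "nsc 0 u = 0" by (simp add: nsc_def)
lemma nsc_Suc: "nsc (Suc k) u = u + nsc k u" by (simp add: nsc_def add.commute)
lemma nsc_add: "nsc (a + b) u = nsc a u + nsc b u"
  by (induction b) (simp_all add: nsc_Suc ac_simps)
lemma nsc_1[simp]: "nsc 1 u = u" by (simp add: nsc_def)
lemma lookup_nsc: "lookup (nsc k u) i = k * lookup u i"
  by (simp add: nsc_def lookup_sum)

definition img :: "(('i \<Rightarrow>\<^sub>0 nat) \<Rightarrow>\<^sub>0 nat) \<Rightarrow> ('i \<Rightarrow>\<^sub>0 nat)" where
  "img m = (\<Sum>u\<in>Poly_Mapping.keys m. nsc (lookup m u) u)"

lemma img_add: "img (a + b) = img a + img b"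
  unfolding img_def
  by (rule setsum_keys_plus_distrib) (simp_all add: nsc_add)

lemma img_single: "img (Poly_Mapping.single u 1) = u"
  by (simp add: img_def flip: One_nat_def)

lemma img_zero[simp]: "img 0 = 0" by (simp add: img_def)

lemma xmono_pow: "(xmono u :: ('i \<Rightarrow>\<^sub>0 nat) \<Rightarrow>\<^sub>0 'k::comm_ring_1) ^ k = Poly_Mapping.single (nsc k u) 1"
  by (induction k) (simp_all add: xmono_def nsc_Suc mult_single)

lemma prod_single:
  "(\<Prod>u\<in>S. Poly_Mapping.single (f u) (1::'k::comm_ring_1)) = Poly_Mapping.single (\<Sum>u\<in>S. f u) 1"
  by (induction S rule: infinite_finite_induct) (simp_all add: mult_single)

lemma toric_map_eq:
  "toric_map (p :: ('i,'k::comm_ring_1) ypoly) = (\<Sum>m\<in>Poly_Mapping.keys p. Poly_Mapping.single (img m) (lookup p m))"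
  unfolding toric_map_def img_def
  by (simp add: xmono_pow prod_single mult_single)

lemma toric_map_add: "toric_map (p + q :: ('i,'k::comm_ring_1) ypoly) = toric_map p + toric_map q"
  unfolding toric_map_eq
  by (rule setsum_keys_plus_distrib) (simp_all add: single_add)

lemma toric_map_zero[simp]: "toric_map 0 = 0"
  by (simp add: toric_map_eq)

lemma toric_map_single: "toric_map (Poly_Mapping.single m c :: ('i,'k::comm_ring_1) ypoly) = Poly_Mapping.single (img m) c"
  by (simp add: toric_map_eq)

lemma toric_map_sum: "toric_map (\<Sum>x\<in>S. f x :: ('i,'k::comm_ring_1) ypoly) = (\<Sum>x\<in>S. toric_map (f x))"
  by (induction S rule: infinite_finite_induct) (simp_all add: toric_map_add)

lemma toric_map_uminus: "toric_map (- p :: ('i,'k::comm_ring_1) ypoly) = - toric_map p"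
  by (metis add_eq_0_iff2 toric_map_add toric_map_zero)

lemma toric_map_diff: "toric_map (p - q :: ('i,'k::comm_ring_1) ypoly) = toric_map p - toric_map q"
  by (metis diff_conv_add_uminus toric_map_add toric_map_uminus)

lemma toric_map_single_mult:
  "toric_map (Poly_Mapping.single m c * q :: ('i,'k::comm_ring_1) ypoly) = Poly_Mapping.single (img m) c * toric_map q"
proof -
  have "Poly_Mapping.single m c * q = (\<Sum>m'\<in>keys q. Poly_Mapping.single (m + m') (c * lookup q m'))"
    by (subst pm_expand[of q]) (simp add: sum_distrib_left mult_single)
  then have "toric_map (Poly_Mapping.single m c * q) = (\<Sum>m'\<in>keys q. Poly_Mapping.single (img m + img m') (c * lookup q m'))"
    by (simp add: toric_map_sum toric_map_single img_add)
  also have "\<dots> = Poly_Mapping.single (img m) c * toric_map q"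
    by (simp add: toric_map_eq sum_distrib_left mult_single)
  finally show ?thesis .
qed

lemma toric_map_mult: "toric_map (p * q :: ('i,'k::comm_ring_1) ypoly) = toric_map p * toric_map q"
proof -
  have "toric_map (p * q) = toric_map ((\<Sum>m\<in>keys p. Poly_Mapping.single m (lookup p m)) * q)"
    by (subst pm_expand[of p]) simp
  also have "\<dots> = (\<Sum>m\<in>keys p. Poly_Mapping.single (img m) (lookup p m) * toric_map q)"
    by (simp add: sum_distrib_right toric_map_sum toric_map_single_mult)
  also have "\<dots> = toric_map p * toric_map q"
    by (simp add: toric_map_eq sum_distrib_right)
  finally show ?thesis .
qed




definition msmon :: "'a multiset \<Rightarrow> ('a \<Rightarrow>\<^sub>0 nat)" where
  "msmon M = Abs_poly_mapping (count M)"

lemma lookup_msmon[simp]: "lookup (msmon M) = count M"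
proof -
  have "{x. count M x \<noteq> 0} = set_mset M" by auto
  then show ?thesis unfolding msmon_def by (simp add: lookup_Abs_poly_mapping)
qed

lemma keys_msmon[simp]: "keys (msmon M) = set_mset M"
  by (auto simp: in_keys_iff)

lemma msmon_add: "msmon (M + N) = msmon M + msmon N"
  by (rule poly_mapping_eqI) (simp add: lookup_add)

lemma msmon_empty[simp]: "msmon {#} = 0"
  by (rule poly_mapping_eqI) simp

lemma msmon_single: "msmon {#x#} = Poly_Mapping.single x 1"
  by (rule poly_mapping_eqI) (simp add: lookup_single when_def)

lemma msmon_inj: "msmon M = msmon N \<longleftrightarrow> M = N"
  by (metis lookup_msmon multiset_eq_iff)

definition tom :: "('a \<Rightarrow>\<^sub>0 nat) \<Rightarrow> 'a multiset" where
  "tom m = Abs_multiset (lookup m)"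

lemma count_tom[simp]: "count (tom m) = lookup m"
proof -
  have "finite {x. lookup m x > 0}" using finite_lookup[of m] by (simp add: gr0_conv_Suc)
  then show ?thesis unfolding tom_def by (rule count_Abs_multiset)
qed

lemma msmon_tom[simp]: "msmon (tom m) = m"
  by (rule poly_mapping_eqI) simp

lemma set_mset_tom[simp]: "set_mset (tom m) = keys m"
  by (metis keys_msmon msmon_tom)

lemma img_msmon: "img (msmon M) = sum_mset M"
proof (induction M)
  case empty then show ?case by simp
next
  case (add x M)
  have "msmon (add_mset x M) = msmon {#x#} + msmon M"
    by (simp flip: msmon_add)
  then show ?case using add img_single[of x] by (simp add: img_add msmon_single)
qed

definition mono :: "('a \<Rightarrow>\<^sub>0 nat) \<Rightarrow> (('a \<Rightarrow>\<^sub>0 nat) \<Rightarrow>\<^sub>0 'k::comm_ring_1)" where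
  "mono m = Poly_Mapping.single m 1"

lemma mono_add: "mono (a + b) = (mono a * mono b :: _ \<Rightarrow>\<^sub>0 'k::comm_ring_1)"
  by (simp add: mono_def mult_single)

lemma yvar_mono: "yvar u = mono (msmon {#u#})"
  by (simp add: yvar_def mono_def msmon_single)

lemma yvar_mult: "(yvar u1 * yvar u2 :: ('i,'k::comm_ring_1) ypoly) = mono (msmon {#u1, u2#})"
proof -
  have "{#u1, u2#} = {#u1#} + {#u2#}" by simp
  then show ?thesis by (simp only: yvar_mono mono_add msmon_add flip: mono_add)
qed

lemma toric_map_mono: "toric_map (mono (msmon M) :: ('i,'k::comm_ring_1) ypoly) = Poly_Mapping.single (sum_mset M) 1"
  by (simp add: mono_def toric_map_single img_msmon)

lemma poly_ring_zero[simp]: "0 \<in> poly_ring B"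
  by (simp add: poly_ring_def)

lemma poly_ring_add:
  assumes "p \<in> poly_ring B" "q \<in> poly_ring B" shows "p + q \<in> poly_ring B"
  unfolding poly_ring_def
proof (rule CollectI, rule ballI)
  fix m assume "m \<in> keys (p + q)"
  from subsetD[OF keys_add[of p q] this] have "m \<in> keys p \<or> m \<in> keys q" by simp
  then show "keys m \<subseteq> B" using assms unfolding poly_ring_def by blast
qed

lemma poly_ring_uminus: "p \<in> poly_ring B \<Longrightarrow> - p \<in> poly_ring B"
  unfolding poly_ring_def by simp

lemma poly_ring_diff: "p \<in> poly_ring B \<Longrightarrow> q \<in> poly_ring B \<Longrightarrow> p - q \<in> poly_ring B"
  by (metis diff_conv_add_uminus poly_ring_add poly_ring_uminus)

lemma poly_ring_mult: "p \<in> poly_ring B \<Longrightarrow> q \<in> poly_ring B \<Longrightarrow> p * q \<in> poly_ring B"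
  unfolding poly_ring_def
proof safe
  fix m x
  assume p: "\<forall>m\<in>keys p. keys m \<subseteq> B" and q: "\<forall>m\<in>keys q. keys m \<subseteq> B"
    and m: "m \<in> keys (p * q)" and x: "x \<in> keys m"
  have "m \<in> {a + b |a b. a \<in> keys p \<and> b \<in> keys q}" using keys_mult[of p q] m by (rule subsetD)
  then obtain a b where ab: "m = a + b" "a \<in> keys p" "b \<in> keys q" by blast
  have "x \<in> keys a \<union> keys b" using x keys_add[of a b] ab(1) by blast
  then show "x \<in> B" using p q ab by blast
qed

lemma poly_ring_single: "keys m \<subseteq> B \<Longrightarrow> Poly_Mapping.single m c \<in> poly_ring B"
  unfolding poly_ring_def by simp

lemma poly_ring_mono: "set_mset M \<subseteq> B \<Longrightarrow> mono (msmon M) \<in> poly_ring B"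
  unfolding mono_def by (rule poly_ring_single) simp

lemma poly_ring_sum: "(\<And>x. x \<in> S \<Longrightarrow> f x \<in> poly_ring B) \<Longrightarrow> (\<Sum>x\<in>S. f x) \<in> poly_ring B"
  by (induction S rule: infinite_finite_induct) (simp_all add: poly_ring_add)

lemma gen_ideal_zero[simp]: "0 \<in> gen_ideal R G"
  unfolding gen_ideal_def by (rule CollectI, rule exI[of _ "{}"]) simp

lemma gen_ideal_gen: "g \<in> G \<Longrightarrow> r \<in> R \<Longrightarrow> r * g \<in> gen_ideal R G"
  unfolding gen_ideal_def by (rule CollectI, rule exI[of _ "{g}"], rule exI[of _ "\<lambda>_. r"]) simp

lemma gen_ideal_add:
  assumes "p \<in> gen_ideal (poly_ring B) G" "q \<in> gen_ideal (poly_ring B) G"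
  shows "p + q \<in> gen_ideal (poly_ring B) G"
proof -
  from assms obtain F r F' r' where F: "finite F" "F \<subseteq> G" "\<forall>g\<in>F. r g \<in> poly_ring B" "p = (\<Sum>g\<in>F. r g * g)"
    and F': "finite F'" "F' \<subseteq> G" "\<forall>g\<in>F'. r' g \<in> poly_ring B" "q = (\<Sum>g\<in>F'. r' g * g)"
    unfolding gen_ideal_def by blast
  define r'' where "r'' g = (if g \<in> F then r g else 0) + (if g \<in> F' then r' g else 0)" for g
  have "(\<Sum>g\<in>F\<union>F'. r'' g * g) = (\<Sum>g\<in>F\<union>F'. (if g \<in> F then r g * g else 0)) + (\<Sum>g\<in>F\<union>F'. (if g \<in> F' then r' g * g else 0))"
    unfolding r''_def sum.distrib[symmetric] by (intro sum.cong refl) (simp add: distrib_right)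
  also have "(\<Sum>g\<in>F\<union>F'. (if g \<in> F then r g * g else 0)) = p"
    using F F' by (intro trans[OF sum.mono_neutral_cong_right[of "F \<union> F'" F]]) auto
  also have "(\<Sum>g\<in>F\<union>F'. (if g \<in> F' then r' g * g else 0)) = q"
    using F F' by (intro trans[OF sum.mono_neutral_cong_right[of "F \<union> F'" F']]) auto
  finally have e0: "(\<Sum>g\<in>F\<union>F'. r'' g * g) = p + q" .
  note e = e0[symmetric]
  have r: "\<forall>g\<in>F\<union>F'. r'' g \<in> poly_ring B"
    using F F' unfolding r''_def by (auto intro!: poly_ring_add)
  have fin: "finite (F \<union> F')" "F \<union> F' \<subseteq> G" using F(1,2) F'(1,2) by auto
  show ?thesis unfolding gen_ideal_def mem_Collect_eq
    apply (rule exI[of _ "F \<union> F'"], rule exI[of _ r''])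
    using fin r e by blast
qed

lemma gen_ideal_mult:
  assumes "p \<in> gen_ideal (poly_ring B) G" "s \<in> poly_ring B"
  shows "s * p \<in> gen_ideal (poly_ring B) G"
proof -
  from assms obtain F r where F: "finite F" "F \<subseteq> G" "\<forall>g\<in>F. r g \<in> poly_ring B" "p = (\<Sum>g\<in>F. r g * g)"
    unfolding gen_ideal_def by blast
  have e: "s * p = (\<Sum>g\<in>F. (s * r g) * g)" using F by (simp add: sum_distrib_left mult.assoc)
  have r: "\<forall>g\<in>F. s * r g \<in> poly_ring B" using F assms by (auto intro: poly_ring_mult)
  show ?thesis unfolding gen_ideal_def mem_Collect_eq
    by (rule exI[of _ F], rule exI[of _ "\<lambda>g. s * r g"]) (intro conjI F(1,2) r e)
qed

lemma one_poly_ring: "1 \<in> poly_ring B"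
  using poly_ring_single[of 0 B 1] by simp

lemma gen_ideal_uminus:
  assumes "p \<in> gen_ideal (poly_ring B) G" shows "- p \<in> gen_ideal (poly_ring B) G"
  using gen_ideal_mult[OF assms poly_ring_uminus[OF one_poly_ring]] by simp

lemma gen_ideal_diff:
  assumes "p \<in> gen_ideal (poly_ring B) G" "q \<in> gen_ideal (poly_ring B) G"
  shows "p - q \<in> gen_ideal (poly_ring B) G"
  by (metis assms diff_conv_add_uminus gen_ideal_add gen_ideal_uminus)

lemma gen_ideal_sum:
  "(\<And>x. x \<in> S \<Longrightarrow> f x \<in> gen_ideal (poly_ring B) G) \<Longrightarrow> (\<Sum>x\<in>S. f x) \<in> gen_ideal (poly_ring B) G"
  by (induction S rule: infinite_finite_induct) (simp_all add: gen_ideal_add)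




lemma ds_sum: "double_swap B u1 u2 v1 v2 \<Longrightarrow> u1 + u2 = v1 + v2"
proof -
  assume "double_swap B u1 u2 v1 v2"
  then obtain i j where e: "v1 + unit_vec i = u1 + unit_vec j" "v2 + unit_vec j = u2 + unit_vec i"
    unfolding double_swap_def by blast
  have "(v1 + v2) + (unit_vec i + unit_vec j) = (u1 + u2) + (unit_vec i + unit_vec j)"
    using arg_cong2[OF e, of "(+)"] by (simp add: ac_simps)
  then show ?thesis by simp
qed

lemma ds_binom_eq:
  "(yvar u1 * yvar u2 - yvar v1 * yvar v2 :: ('i,'k::comm_ring_1) ypoly) = mono (msmon {#u1,u2#}) - mono (msmon {#v1,v2#})"
  by (simp add: yvar_mult)

lemma ds_binom_toric:
  assumes "double_swap B u1 u2 v1 v2"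
  shows "(mono (msmon {#u1,u2#}) - mono (msmon {#v1,v2#}) :: ('i,'k::comm_ring_1) ypoly) \<in> toric_ideal B"
proof -
  have B: "u1 \<in> B" "u2 \<in> B" "v1 \<in> B" "v2 \<in> B" using assms unfolding double_swap_def by auto
  have "toric_map (mono (msmon {#u1,u2#}) - mono (msmon {#v1,v2#}) :: ('i,'k) ypoly) = 0"
    using ds_sum[OF assms] by (simp add: toric_map_diff toric_map_mono)
  moreover have "(mono (msmon {#u1,u2#}) - mono (msmon {#v1,v2#}) :: ('i,'k) ypoly) \<in> poly_ring B"
    using B by (intro poly_ring_diff poly_ring_mono) auto
  ultimately show ?thesis unfolding toric_ideal_def by blast
qed

lemma toric_ideal_mult:
  assumes "p \<in> toric_ideal B" "r \<in> poly_ring B"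
  shows "r * p \<in> toric_ideal B"
  using assms unfolding toric_ideal_def by (auto simp: toric_map_mult intro: poly_ring_mult)

lemma toric_ideal_add:
  assumes "p \<in> toric_ideal B" "q \<in> toric_ideal B"
  shows "p + q \<in> toric_ideal B"
  using assms unfolding toric_ideal_def by (auto simp: toric_map_add intro: poly_ring_add)

lemma toric_ideal_sum:
  "(\<And>x. x \<in> S \<Longrightarrow> f x \<in> toric_ideal B) \<Longrightarrow> (\<Sum>x\<in>S. f x) \<in> toric_ideal B"
proof (induction S rule: infinite_finite_induct)
  case (infinite A) then show ?case by (simp add: toric_ideal_def)
next
  case empty then show ?case by (simp add: toric_ideal_def)
next
  case (insert x F) then show ?case by (simp add: toric_ideal_add)
qed

lemma gen_subset_toric:
  "gen_ideal (poly_ring B) (double_swap_binomials B) \<subseteq> (toric_ideal B :: ('i,'k::comm_ring_1) ypoly set)"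
proof
  fix p :: "('i,'k) ypoly"
  assume "p \<in> gen_ideal (poly_ring B) (double_swap_binomials B)"
  then obtain F r where F: "finite F" "F \<subseteq> double_swap_binomials B" "\<forall>g\<in>F. r g \<in> poly_ring B"
    "p = (\<Sum>g\<in>F. r g * g)" unfolding gen_ideal_def by blast
  have "\<forall>g\<in>F. g \<in> toric_ideal B"
  proof
    fix g assume "g \<in> F"
    then have "g \<in> double_swap_binomials B" using F(2) by blast
    then obtain u1 u2 v1 v2 where "double_swap B u1 u2 v1 v2" "g = yvar u1 * yvar u2 - yvar v1 * yvar v2"
      unfolding double_swap_binomials_def by blast
    then show "g \<in> toric_ideal B" using ds_binom_toric ds_binom_eq by metis
  qed
  then show "p \<in> toric_ideal B" using F(3,4) by (auto intro!: toric_ideal_sum toric_ideal_mult)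
qed

lemma single_sum: "Poly_Mapping.single k (\<Sum>x\<in>S. f x) = (\<Sum>x\<in>S. Poly_Mapping.single k (f x))"
  by (induction S rule: infinite_finite_induct) (simp_all add: single_add)

lemma lookup_toric_map:
  "lookup (toric_map (p :: ('i,'k::comm_ring_1) ypoly)) e = (\<Sum>m\<in>{m\<in>keys p. img m = e}. lookup p m)"
  by (simp add: toric_map_eq lookup_sum lookup_single when_def sum.inter_filter)

lemma toric_subset_via_binomials:
  fixes J :: "('i,'k::comm_ring_1) ypoly set"
  assumes J: "J = gen_ideal (poly_ring B) G"
    and bin: "\<And>a b. set_mset a \<subseteq> B \<Longrightarrow> set_mset b \<subseteq> B \<Longrightarrow> sum_mset a = sum_mset b \<Longrightarrow>
              mono (msmon a) - mono (msmon b) \<in> J"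
  shows "toric_ideal B \<subseteq> J"
proof
  fix p :: "('i,'k) ypoly"
  assume p: "p \<in> toric_ideal B"
  then have pr: "\<And>m. m \<in> keys p \<Longrightarrow> keys m \<subseteq> B" and tm: "toric_map p = 0"
    unfolding toric_ideal_def poly_ring_def by auto
  define rep where "rep e = (SOME m. m \<in> keys p \<and> img m = e)" for e
  have rep: "rep (img m) \<in> keys p \<and> img (rep (img m)) = img m" if "m \<in> keys p" for m
    unfolding rep_def by (rule someI[of _ m]) (use that in simp)
  have zero: "(\<Sum>m\<in>{m\<in>keys p. img m = e}. lookup p m) = 0" for e
    using arg_cong[OF tm, of "\<lambda>x. lookup x e"] by (simp add: lookup_toric_map)
  have "p = (\<Sum>m\<in>keys p. Poly_Mapping.single 0 (lookup p m) * mono m)"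
    by (subst pm_expand) (simp add: mono_def mult_single)
  also have "\<dots> = (\<Sum>m\<in>keys p. Poly_Mapping.single 0 (lookup p m) * (mono m - mono (rep (img m))))
       + (\<Sum>m\<in>keys p. Poly_Mapping.single 0 (lookup p m) * mono (rep (img m)))"
    by (simp add: sum.distrib[symmetric] algebra_simps)
  also have "(\<Sum>m\<in>keys p. Poly_Mapping.single 0 (lookup p m) * mono (rep (img m))) = 0"
  proof -
    have "(\<Sum>m\<in>keys p. Poly_Mapping.single 0 (lookup p m) * mono (rep (img m))) =
       (\<Sum>e\<in>img ` keys p. \<Sum>m\<in>{m\<in>keys p. img m = e}. Poly_Mapping.single 0 (lookup p m) * mono (rep (img m)))"
      by (rule sum.image_gen) simp
    also have "\<dots> = (\<Sum>e\<in>img ` keys p. Poly_Mapping.single 0 (\<Sum>m\<in>{m\<in>keys p. img m = e}. lookup p m) * mono (rep e))"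
    proof (intro sum.cong refl)
      fix e
      have "(\<Sum>m\<in>{m\<in>keys p. img m = e}. Poly_Mapping.single 0 (lookup p m) * mono (rep (img m)))
          = (\<Sum>m\<in>{m\<in>keys p. img m = e}. Poly_Mapping.single 0 (lookup p m) * mono (rep e))"
        by (rule sum.cong) auto
      also have "\<dots> = Poly_Mapping.single 0 (\<Sum>m\<in>{m\<in>keys p. img m = e}. lookup p m) * mono (rep e)"
        by (simp add: sum_distrib_right single_sum)
      finally show "(\<Sum>m\<in>{m\<in>keys p. img m = e}. Poly_Mapping.single 0 (lookup p m) * mono (rep (img m)))
          = Poly_Mapping.single 0 (\<Sum>m\<in>{m\<in>keys p. img m = e}. lookup p m) * mono (rep e)" .
    qed
    also have "\<dots> = 0" by (simp add: zero)
    finally show ?thesis .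
  qed
  finally have pe: "p = (\<Sum>m\<in>keys p. Poly_Mapping.single 0 (lookup p m) * (mono m - mono (rep (img m))))"
    by simp
  have "Poly_Mapping.single 0 (lookup p m) * (mono m - mono (rep (img m))) \<in> J" if m: "m \<in> keys p" for m
  proof -
    have r: "rep (img m) \<in> keys p" "img (rep (img m)) = img m" using rep[OF m] by auto
    have "mono (msmon (tom m)) - mono (msmon (tom (rep (img m)))) \<in> J"
      by (rule bin) (use pr[OF m] pr[OF r(1)] r(2) in \<open>auto simp flip: img_msmon\<close>)
    then have "mono m - mono (rep (img m)) \<in> J" by simp
    then show ?thesis unfolding J by (rule gen_ideal_mult) (rule poly_ring_single, simp)
  qed
  then show "p \<in> J" by (subst pe) (unfold J, rule gen_ideal_sum, unfold J[symmetric])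
qed




definition ds_edge :: "('i \<Rightarrow>\<^sub>0 nat) set \<Rightarrow> ('i \<Rightarrow>\<^sub>0 nat) multiset \<Rightarrow> ('i \<Rightarrow>\<^sub>0 nat) multiset \<Rightarrow> bool" where
  "ds_edge B M N \<longleftrightarrow> (\<exists>T u1 u2 v1 v2. double_swap B u1 u2 v1 v2 \<and> M = T + {#u1,u2#} \<and> N = T + {#v1,v2#})"

definition sedge :: "('i \<Rightarrow>\<^sub>0 nat) set \<Rightarrow> ('i \<Rightarrow>\<^sub>0 nat) multiset \<Rightarrow> ('i \<Rightarrow>\<^sub>0 nat) multiset \<Rightarrow> bool" where
  "sedge B M N \<longleftrightarrow> ds_edge B M N \<or> ds_edge B N M"

definition phi :: "'m set \<Rightarrow> ('m \<Rightarrow>\<^sub>0 'k::comm_ring_1) \<Rightarrow> 'k" where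
  "phi C p = (\<Sum>m\<in>keys p. if m \<in> C then lookup p m else 0)"

lemma phi_add: "phi C (p + q) = phi C p + phi C q"
  unfolding phi_def by (rule setsum_keys_plus_distrib) auto

lemma phi_zero[simp]: "phi C 0 = 0" by (simp add: phi_def)

lemma phi_uminus: "phi C (- p) = - phi C p"
  by (metis add_eq_0_iff2 phi_add phi_zero)

lemma phi_diff: "phi C (p - q) = phi C p - phi C q"
  by (metis diff_conv_add_uminus phi_add phi_uminus)

lemma phi_sum: "phi C (\<Sum>x\<in>S. f x) = (\<Sum>x\<in>S. phi C (f x))"
  by (induction S rule: infinite_finite_induct) (simp_all add: phi_add)

lemma phi_single: "phi C (Poly_Mapping.single m c) = (if m \<in> C then c else 0)"
  by (simp add: phi_def)

lemma mult_single_right: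
  "(r :: ('a::comm_monoid_add \<Rightarrow>\<^sub>0 'k::comm_ring_1)) * Poly_Mapping.single s 1 = (\<Sum>t\<in>keys r. Poly_Mapping.single (t + s) (lookup r t))"
  by (subst pm_expand[of r]) (simp add: sum_distrib_right mult_single)

lemma phi_mult_mono:
  "phi C ((r :: ('a::comm_monoid_add \<Rightarrow>\<^sub>0 'k::comm_ring_1)) * Poly_Mapping.single s 1) = (\<Sum>t\<in>keys r. if t + s \<in> C then lookup r t else 0)"
  by (simp add: mult_single_right phi_sum phi_single)

lemma tom_add: "tom (a + b) = tom a + tom b"
  by (simp add: multiset_eq_iff lookup_add)

lemma tom_msmon[simp]: "tom (msmon M) = M"
  by (metis msmon_inj msmon_tom)

lemma conn_from_ideal:
  fixes M N :: "('i \<Rightarrow>\<^sub>0 nat) multiset"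
  assumes "(mono (msmon M) - mono (msmon N) :: ('i,'k::comm_ring_1) ypoly) \<in> gen_ideal R (double_swap_binomials B)"
  shows "(sedge B)\<^sup>*\<^sup>* M N"
proof -
  define C where "C = {m. (sedge B)\<^sup>*\<^sup>* M (tom m)}"
  from assms obtain F r where F: "finite F" "F \<subseteq> double_swap_binomials B"
    "(mono (msmon M) - mono (msmon N) :: ('i,'k) ypoly) = (\<Sum>g\<in>F. r g * g)"
    unfolding gen_ideal_def by blast
  have z: "phi C (r g * g) = 0" if "g \<in> F" for g
  proof -
    from that F(2) have "g \<in> double_swap_binomials B" by blast
    then obtain u1 u2 v1 v2 where ds: "double_swap B u1 u2 v1 v2" and g: "g = yvar u1 * yvar u2 - yvar v1 * yvar v2"
      unfolding double_swap_binomials_def by blast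
    have iff: "t + msmon {#u1,u2#} \<in> C \<longleftrightarrow> t + msmon {#v1,v2#} \<in> C" for t
    proof -
      have e: "ds_edge B (tom t + {#u1,u2#}) (tom t + {#v1,v2#})"
        unfolding ds_edge_def using ds by blast
      show ?thesis unfolding C_def
        using e by (auto simp: tom_add sedge_def intro: rtranclp.rtrancl_into_rtrancl)
    qed
    have "phi C (r g * g) = phi C (r g * mono (msmon {#u1,u2#})) - phi C (r g * mono (msmon {#v1,v2#}))"
      by (simp add: g ds_binom_eq right_diff_distrib phi_diff)
    also have "\<dots> = 0"
      unfolding mono_def phi_mult_mono using iff by simp
    finally show ?thesis .
  qed
  have "phi C (mono (msmon M) - mono (msmon N) :: ('i,'k) ypoly) = 0"
    unfolding F(3) phi_sum using z by simp
  moreover have "msmon M \<in> C" unfolding C_def by simp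
  ultimately have "msmon N \<in> C"
    by (auto simp: phi_diff mono_def phi_single split: if_splits)
  then show ?thesis unfolding C_def by simp
qed




lemma lookup_unit_vec: "lookup (unit_vec i) j = (if i = j then 1 else 0)"
  by (simp add: unit_vec_def lookup_single when_def)

lemma keys_unit_vec[simp]: "keys (unit_vec i) = {i}"
  by (simp add: unit_vec_def)

definition wsum :: "'i set \<Rightarrow> ('i \<Rightarrow>\<^sub>0 nat) \<Rightarrow> nat" where
  "wsum A x = (\<Sum>a\<in>A. lookup x a)"

definition restr :: "'i set \<Rightarrow> ('i \<Rightarrow>\<^sub>0 nat) \<Rightarrow> ('i \<Rightarrow>\<^sub>0 nat)" where
  "restr A x = Abs_poly_mapping (\<lambda>i. if i \<in> A then lookup x i else 0)"

lemma lookup_restr: "lookup (restr A x) i = (if i \<in> A then lookup x i else 0)"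
proof -
  have "finite {i. (if i \<in> A then lookup x i else 0) \<noteq> 0}"
    by (rule finite_subset[OF _ finite_lookup[of x]]) auto
  then show ?thesis unfolding restr_def by simp
qed

lemma keys_restr: "keys (restr A x) \<subseteq> A \<inter> keys x"
  by (auto simp: in_keys_iff lookup_restr split: if_splits)

lemma vec_size_eq: "finite S \<Longrightarrow> keys u \<subseteq> S \<Longrightarrow> vec_size u = wsum S u"
  unfolding vec_size_def wsum_def by (rule sum_keys_superset[where G = "\<lambda>m c. c"]) auto

lemma vec_size_add: "vec_size (a + b) = vec_size a + vec_size b"
  unfolding vec_size_def by (rule setsum_keys_plus_distrib) auto

lemma vec_size_unit[simp]: "vec_size (unit_vec i) = 1"
  by (simp add: vec_size_def lookup_unit_vec)

lemma wsum_add: "wsum A (a + b) = wsum A a + wsum A b"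
  by (simp add: wsum_def lookup_add sum.distrib)

lemma wsum_unit: "finite A \<Longrightarrow> wsum A (unit_vec k) = (if k \<in> A then 1 else 0)"
  by (simp add: wsum_def lookup_unit_vec)

lemma wsum_mono: "(\<And>i. lookup x i \<le> lookup y i) \<Longrightarrow> wsum A x \<le> wsum A y"
  unfolding wsum_def by (rule sum_mono) auto

lemma vec_size_one: "vec_size d = 1 \<Longrightarrow> \<exists>c. d = unit_vec c"
proof -
  assume d: "vec_size d = 1"
  then have "keys d \<noteq> {}" by (auto simp: vec_size_def)
  then obtain c where c: "c \<in> keys d" by blast
  have le: "lookup d c \<le> 1"
    using d c unfolding vec_size_def by (metis finite_keys member_le_sum zero_le)
  have "lookup d c \<noteq> 0" using c by (simp add: in_keys_iff)
  then have dc: "lookup d c = 1" using le by simp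
  have "vec_size d = lookup d c + (\<Sum>a\<in>keys d - {c}. lookup d a)"
    unfolding vec_size_def using c by (simp add: sum.remove)
  then have "(\<Sum>a\<in>keys d - {c}. lookup d a) = 0" using d dc by simp
  then have "\<forall>a\<in>keys d - {c}. lookup d a = 0" by simp
  then have "lookup d a = 0" if "a \<noteq> c" for a using that by (auto simp: in_keys_iff)
  then have "d = unit_vec c" by (intro poly_mapping_eqI) (auto simp: lookup_unit_vec dc)
  then show ?thesis by blast
qed

locale dpoly =
  fixes E :: "'i set" and P :: "('i \<Rightarrow>\<^sub>0 nat) set"
  assumes finE: "finite E" and dp: "discrete_polymatroid E P"
begin

lemma P_ne: "P \<noteq> {}" and P_fin: "finite P" and P_keys: "u \<in> P \<Longrightarrow> keys u \<subseteq> E"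
  using dp unfolding discrete_polymatroid_def by auto

lemma P_down: "u \<in> P \<Longrightarrow> keys v \<subseteq> E \<Longrightarrow> (\<And>i. lookup v i \<le> lookup u i) \<Longrightarrow> v \<in> P"
  using dp unfolding discrete_polymatroid_def by blast

lemma P_aug: "u \<in> P \<Longrightarrow> v \<in> P \<Longrightarrow> vec_size u < vec_size v \<Longrightarrow> \<exists>i. lookup u i < lookup v i \<and> u + unit_vec i \<in> P"
  using dp unfolding discrete_polymatroid_def by blast

lemma P_down': "u \<in> P \<Longrightarrow> (\<And>i. lookup v i \<le> lookup u i) \<Longrightarrow> v \<in> P"
proof -
  assume u: "u \<in> P" and le: "\<And>i. lookup v i \<le> lookup u i"
  have "keys v \<subseteq> keys u"
  proof
    fix i assume "i \<in> keys v" then show "i \<in> keys u" using le[of i] by (auto simp: in_keys_iff)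
  qed
  then show ?thesis using P_keys[OF u] by (intro P_down[OF u _ le]) auto
qed

definition rho :: "'i set \<Rightarrow> nat" where
  "rho A = Max (wsum A ` P)"

lemma rho_ge: "x \<in> P \<Longrightarrow> wsum A x \<le> rho A"
  unfolding rho_def using P_fin by (intro Max_ge) auto

lemma rho_attained: "\<exists>z\<in>P. wsum A z = rho A"
proof -
  have "rho A \<in> wsum A ` P" unfolding rho_def using P_fin P_ne by (intro Max_in) auto
  then show ?thesis by auto
qed

lemma restr_in: "x \<in> P \<Longrightarrow> restr A x \<in> P"
  by (rule P_down') (auto simp: lookup_restr)

lemma wsum_restr: "A \<subseteq> B \<Longrightarrow> wsum B (restr A x) = wsum A x" if "finite B"
proof -
  assume AB: "A \<subseteq> B"
  have "wsum B (restr A x) = (\<Sum>a\<in>B. if a \<in> A then lookup x a else 0)"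
    by (simp add: wsum_def lookup_restr)
  also have "\<dots> = (\<Sum>a\<in>A. lookup x a)" using AB that by (simp add: sum.If_cases Int_absorb1)
  finally show ?thesis by (simp add: wsum_def)
qed

lemma aug_in:
  assumes x: "x \<in> P" and kx: "keys x \<subseteq> A" and A: "A \<subseteq> E" and lt: "wsum A x < rho A"
  shows "\<exists>k\<in>A. x + unit_vec k \<in> P"
proof -
  obtain z where z: "z \<in> P" "wsum A z = rho A" using rho_attained by blast
  define z' where "z' = restr A z"
  have z'P: "z' \<in> P" unfolding z'_def using z(1) by (rule restr_in)
  have fA: "finite A" using A finE by (rule finite_subset)
  have "vec_size z' = wsum A z'"
    using keys_restr[of A z] fA by (intro vec_size_eq) (auto simp: z'_def)
  also have "\<dots> = wsum A z" unfolding z'_def using fA by (simp add: wsum_restr)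
  finally have sz: "vec_size z' = rho A" using z(2) by simp
  have sx: "vec_size x = wsum A x" using fA kx by (rule vec_size_eq)
  obtain k where k: "lookup x k < lookup z' k" "x + unit_vec k \<in> P"
    using P_aug[OF x z'P] sx sz lt by auto
  have "k \<in> A" using k(1) by (auto simp: z'_def lookup_restr split: if_splits)
  then show ?thesis using k(2) by blast
qed

lemma aug_full:
  assumes "x \<in> P" "keys x \<subseteq> A" "A \<subseteq> E"
  shows "\<exists>y\<in>P. keys y \<subseteq> A \<and> (\<forall>i. lookup x i \<le> lookup y i) \<and> wsum A y = rho A"
  using assms
proof (induction "rho A - wsum A x" arbitrary: x rule: less_induct)
  case less
  show ?case
  proof (cases "wsum A x < rho A")
    case False
    then have "wsum A x = rho A" using rho_ge[OF less.prems(1), of A] by simp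
    then show ?thesis using less.prems by blast
  next
    case True
    obtain k where k: "k \<in> A" "x + unit_vec k \<in> P" using aug_in[OF less.prems True] by blast
    have "wsum A (x + unit_vec k) = wsum A x + 1"
      using k(1) less.prems(3) finE by (simp add: wsum_add wsum_unit finite_subset)
    then have lt: "rho A - wsum A (x + unit_vec k) < rho A - wsum A x" using True by simp
    have kk: "keys (x + unit_vec k) \<subseteq> A"
      using keys_add[of x "unit_vec k"] less.prems(2) k(1) by auto
    obtain y where y: "y \<in> P" "keys y \<subseteq> A" "\<forall>i. lookup (x + unit_vec k) i \<le> lookup y i" "wsum A y = rho A"
      using less.hyps[OF lt k(2) kk less.prems(3)] by blast
    have "\<forall>i. lookup x i \<le> lookup y i"
      using y(3) by (metis add_leD1 lookup_add)
    then show ?thesis using y by blast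
  qed
qed

lemma submod:
  assumes "A \<subseteq> E" "B \<subseteq> E"
  shows "rho (A \<union> B) + rho (A \<inter> B) \<le> rho A + rho B"
proof -
  have fin: "finite A" "finite B" using assms finE finite_subset by auto
  obtain y0 where y0: "y0 \<in> P" "wsum (A \<inter> B) y0 = rho (A \<inter> B)" using rho_attained by blast
  define y where "y = restr (A \<inter> B) y0"
  have yP: "y \<in> P" unfolding y_def using y0(1) by (rule restr_in)
  have ky: "keys y \<subseteq> A" using keys_restr[of "A \<inter> B" y0] unfolding y_def by auto
  have wy: "wsum (A \<inter> B) y = rho (A \<inter> B)"
    unfolding y_def using y0(2) fin by (simp add: wsum_restr)
  obtain z where z: "z \<in> P" "keys z \<subseteq> A" "\<forall>i. lookup y i \<le> lookup z i" "wsum A z = rho A"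
    using aug_full[OF yP ky assms(1)] by blast
  obtain w where w: "w \<in> P" "keys w \<subseteq> A \<union> B" "\<forall>i. lookup z i \<le> lookup w i" "wsum (A \<union> B) w = rho (A \<union> B)"
    using aug_full[OF z(1) _ ] z(2) assms by (metis Un_subset_iff le_supI1)
  have "wsum A w \<ge> rho A" using z(4) w(3) wsum_mono[of z w A] by simp
  then have wA: "wsum A w = rho A" using rho_ge[OF w(1), of A] by simp
  have "wsum (A \<inter> B) w \<ge> rho (A \<inter> B)"
    using wy z(3) w(3) wsum_mono[of y w "A \<inter> B"] le_trans by metis
  then have wAB: "wsum (A \<inter> B) w = rho (A \<inter> B)" using rho_ge[OF w(1), of "A \<inter> B"] by simp
  have wB: "wsum B w \<le> rho B" using rho_ge[OF w(1)] .
  have "wsum (A \<union> B) w + wsum (A \<inter> B) w = wsum A w + wsum B w"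
    unfolding wsum_def using fin by (rule sum.union_inter)
  then show ?thesis using w(4) wA wAB wB by simp
qed

end




lemma vec_size_zero: "vec_size d = 0 \<Longrightarrow> d = 0"
proof -
  assume "vec_size d = 0"
  then have "\<forall>i\<in>keys d. lookup d i = 0" unfolding vec_size_def by simp
  then show ?thesis by (intro poly_mapping_eqI) (metis in_keys_iff lookup_zero)
qed

lemma pm_minus_add: "(\<And>i. lookup q i \<le> lookup ov i) \<Longrightarrow> q + (ov - q) = (ov :: 'i \<Rightarrow>\<^sub>0 nat)"
  by (intro poly_mapping_eqI) (simp add: lookup_add lookup_minus)

lemma sub_unit_add: "1 \<le> lookup u i \<Longrightarrow> (u - unit_vec i) + unit_vec i = u"
  by (intro poly_mapping_eqI) (auto simp: lookup_add lookup_minus lookup_unit_vec)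

context dpoly
begin

lemma size_wsum: "x \<in> P \<Longrightarrow> vec_size x = wsum E x"
  using finE P_keys by (rule vec_size_eq)

lemma base_iff: "u \<in> bases P \<longleftrightarrow> u \<in> P \<and> vec_size u = rho E"
proof
  assume u: "u \<in> bases P"
  then have uP: "u \<in> P" by (simp add: bases_def)
  have le: "vec_size u \<le> rho E" using size_wsum[OF uP] rho_ge[OF uP] by simp
  show "u \<in> P \<and> vec_size u = rho E"
  proof (rule ccontr)
    assume "\<not> (u \<in> P \<and> vec_size u = rho E)"
    then have lt: "vec_size u < rho E" using le uP by simp
    obtain z where z: "z \<in> P" "wsum E z = rho E" using rho_attained by blast
    obtain i where i: "u + unit_vec i \<in> P" using P_aug[OF uP z(1)] lt size_wsum[OF z(1)] z(2) by auto
    have "\<forall>k. lookup u k \<le> lookup (u + unit_vec i) k" by (simp add: lookup_add)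
    then have "u + unit_vec i = u" using u i unfolding bases_def by blast
    then have "lookup (u + unit_vec i) i = lookup u i" by simp
    then show False by (simp add: lookup_add lookup_unit_vec)
  qed
next
  assume a: "u \<in> P \<and> vec_size u = rho E"
  show "u \<in> bases P" unfolding bases_def
  proof (intro CollectI conjI ballI impI)
    show "u \<in> P" using a by simp
    fix v assume vP: "v \<in> P" and le: "\<forall>i. lookup u i \<le> lookup v i"
    have vu: "u + (v - u) = v" using le by (intro pm_minus_add) auto
    have "vec_size v \<le> rho E" using size_wsum[OF vP] rho_ge[OF vP] by simp
    then have "vec_size (v - u) = 0" using arg_cong[OF vu, of vec_size] a by (simp add: vec_size_add)
    then have "v - u = 0" by (rule vec_size_zero)
    then show "v = u" using vu by simp
  qed
qed

lemma tight:
  assumes x: "x \<in> P"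
  shows "wsum {c\<in>E. x + unit_vec c \<notin> P} x = rho {c\<in>E. x + unit_vec c \<notin> P}"
proof (rule ccontr)
  define D where "D = {c\<in>E. x + unit_vec c \<notin> P}"
  assume "wsum {c\<in>E. x + unit_vec c \<notin> P} x \<noteq> rho {c\<in>E. x + unit_vec c \<notin> P}"
  then have lt: "wsum D x < rho D" using rho_ge[OF x, of D] unfolding D_def by simp
  have DE: "D \<subseteq> E" and fD: "finite D" unfolding D_def using finE by auto
  define y where "y = restr D x"
  have yP: "y \<in> P" unfolding y_def using x by (rule restr_in)
  have ky: "keys y \<subseteq> D" using keys_restr[of D x] unfolding y_def by auto
  have "wsum D y = wsum D x" unfolding y_def using fD by (simp add: wsum_restr)
  then obtain k where k: "k \<in> D" "y + unit_vec k \<in> P" using aug_in[OF yP ky DE] lt by auto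
  define ov where "ov = restr (E - D) x"
  have xyo: "x = y + ov"
  proof (rule poly_mapping_eqI)
    fix i
    show "lookup x i = lookup (y + ov) i"
      using P_keys[OF x] DE by (auto simp: y_def ov_def lookup_add lookup_restr in_keys_iff)
  qed
  have ko: "keys ov \<subseteq> E - D" using keys_restr[of "E - D" x] unfolding ov_def by auto
  have ok: "lookup ov k = 0" using k(1) by (simp add: ov_def lookup_restr)
  have claim: "m < vec_size ov \<Longrightarrow> \<exists>q. (\<forall>c. lookup q c \<le> lookup ov c) \<and> vec_size q = m \<and> y + unit_vec k + q \<in> P" for m
  proof (induction m)
    case 0
    show ?case using k(2) by (intro exI[of _ 0]) (simp add: vec_size_def)
  next
    case (Suc m)
    then obtain q where q: "\<forall>c. lookup q c \<le> lookup ov c" "vec_size q = m" "y + unit_vec k + q \<in> P" by auto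
    define t where "t = y + unit_vec k + q"
    have "vec_size t < vec_size x"
      using Suc.prems q(2) unfolding t_def xyo by (simp add: vec_size_add)
    then obtain c where c: "lookup t c < lookup x c" "t + unit_vec c \<in> P"
      using P_aug[OF q(3)[folded t_def] x] by blast
    have qc: "lookup q c < lookup ov c"
      using c(1) unfolding t_def xyo by (simp add: lookup_add lookup_unit_vec split: if_splits)
    show ?case
    proof (intro exI conjI allI)
      fix c' show "lookup (q + unit_vec c) c' \<le> lookup ov c'"
        using q(1) qc by (auto simp: lookup_add lookup_unit_vec)
    next
      show "vec_size (q + unit_vec c) = Suc m" using q(2) by (simp add: vec_size_add)
    next
      show "y + unit_vec k + (q + unit_vec c) \<in> P" using c(2) unfolding t_def by (simp add: add.assoc)
    qed
  qed
  show False
  proof (cases "vec_size ov = 0")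
    case True
    then have "ov = 0" by (rule vec_size_zero)
    then have "x + unit_vec k \<in> P" using k(2) xyo by simp
    then show False using k(1) unfolding D_def by simp
  next
    case False
    then obtain q where q: "\<forall>c. lookup q c \<le> lookup ov c" "vec_size q = vec_size ov - 1" "y + unit_vec k + q \<in> P"
      using claim[of "vec_size ov - 1"] by auto
    have oq: "q + (ov - q) = ov" using q(1) by (intro pm_minus_add) auto
    have "vec_size (ov - q) = 1" using arg_cong[OF oq, of vec_size] q(2) False by (simp add: vec_size_add)
    then obtain c where c: "ov - q = unit_vec c" using vec_size_one by blast
    have oqc: "ov = q + unit_vec c" using oq c by simp
    have "c \<in> keys ov" using oqc by (simp add: in_keys_iff lookup_add lookup_unit_vec)
    then have cE: "c \<in> E" "c \<notin> D" using ko by auto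
    then have xc: "x + unit_vec c \<in> P" unfolding D_def by simp
    define s where "s = y + unit_vec k + q"
    have "vec_size s < vec_size (x + unit_vec c)"
      unfolding s_def xyo oqc by (simp add: vec_size_add)
    then obtain mm where mm: "lookup s mm < lookup (x + unit_vec c) mm" "s + unit_vec mm \<in> P"
      using P_aug[OF q(3)[folded s_def] xc] by blast
    have "mm = c"
      using mm(1) unfolding s_def xyo oqc by (simp add: lookup_add lookup_unit_vec split: if_splits)
    then have "x + unit_vec k \<in> P" using mm(2) unfolding s_def xyo oqc by (simp add: ac_simps)
    then show False using k(1) unfolding D_def by simp
  qed
qed

lemma sym_exchange:
  assumes u: "u \<in> bases P" and v: "v \<in> bases P" and i: "lookup v i < lookup u i"
  shows "\<exists>j. lookup u j < lookup v j \<and> (u - unit_vec i) + unit_vec j \<in> bases P \<and> (v - unit_vec j) + unit_vec i \<in> bases P"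
proof -
  have uP: "u \<in> P" and su: "vec_size u = rho E" using u base_iff by auto
  have vP: "v \<in> P" and sv: "vec_size v = rho E" using v base_iff by auto
  have iE: "i \<in> E" using P_keys[OF uP] i by (auto simp: in_keys_iff)
  define x where "x = u - unit_vec i"
  have xu: "x + unit_vec i = u" unfolding x_def using i by (intro sub_unit_add) simp
  have xP: "x \<in> P" using uP by (rule P_down') (simp add: x_def lookup_minus)
  define T where "T = {c\<in>E. x + unit_vec c \<notin> P}"
  have tT: "wsum T x = rho T" unfolding T_def using xP by (rule tight)
  have TE: "T \<subseteq> E" unfolding T_def by auto
  have iT: "i \<notin> T" unfolding T_def using xu uP by simp
  have wTu: "wsum T u = wsum T x"
    unfolding wsum_def using iT by (intro sum.cong refl) (auto simp: x_def lookup_minus lookup_unit_vec)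
  define S where "S = {A. A \<subseteq> E \<and> i \<in> A \<and> wsum A v = rho A}"
  have ES: "E \<in> S" unfolding S_def using iE sv size_wsum[OF vP] by simp
  obtain U where US: "U \<in> S" and Umin: "\<And>A. A \<in> S \<Longrightarrow> card U \<le> card A"
    using ex_has_least_nat[of "\<lambda>A. A \<in> S" E card] ES by blast
  have UE: "U \<subseteq> E" and iU: "i \<in> U" and tU: "wsum U v = rho U" using US unfolding S_def by auto
  have fU: "finite U" and fT: "finite T" using UE TE finE finite_subset by auto
  have "\<exists>j\<in>U - T. lookup u j < lookup v j"
  proof (rule ccontr)
    assume "\<not> (\<exists>j\<in>U - T. lookup u j < lookup v j)"
    then have le: "\<forall>j\<in>U - T. lookup v j \<le> lookup u j" using not_less by blast
    have sm: "rho (U \<union> T) + rho (U \<inter> T) \<le> rho U + rho T" using submod[OF UE TE] .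
    have a1: "wsum (U \<union> T) u \<le> rho (U \<union> T)" using rho_ge[OF uP] .
    have a2: "wsum (U \<inter> T) v \<le> rho (U \<inter> T)" using rho_ge[OF vP] .
    have e1: "wsum (U \<union> T) u = wsum T u + wsum (U - T) u"
    proof -
      have "U \<union> T = T \<union> (U - T)" by auto
      moreover have "(\<Sum>a\<in>T \<union> (U - T). lookup u a) = (\<Sum>a\<in>T. lookup u a) + (\<Sum>a\<in>U - T. lookup u a)"
        by (rule sum.union_disjoint) (use fU fT in auto)
      ultimately show ?thesis unfolding wsum_def by simp
    qed
    have e2: "wsum U v = wsum (U \<inter> T) v + wsum (U - T) v"
    proof -
      have "U = (U \<inter> T) \<union> (U - T)" by auto
      moreover have "(\<Sum>a\<in>(U \<inter> T) \<union> (U - T). lookup v a) = (\<Sum>a\<in>U \<inter> T. lookup v a) + (\<Sum>a\<in>U - T. lookup v a)"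
        by (rule sum.union_disjoint) (use fU fT in auto)
      ultimately show ?thesis unfolding wsum_def by metis
    qed
    have "wsum (U - T) u \<le> wsum (U - T) v" using sm a1 a2 e1 e2 tU tT wTu by linarith
    moreover have "wsum (U - T) v < wsum (U - T) u"
      unfolding wsum_def using fU le iU iT i by (intro sum_strict_mono_ex1) auto
    ultimately show False by simp
  qed
  then obtain j where j: "j \<in> U" "j \<notin> T" "lookup u j < lookup v j" by blast
  have jE: "j \<in> E" using j UE by auto
  have xj: "x + unit_vec j \<in> bases P"
  proof -
    have "x + unit_vec j \<in> P" using j(2) jE unfolding T_def by simp
    moreover have "vec_size (x + unit_vec j) = rho E"
      using arg_cong[OF xu, of vec_size] su by (simp add: vec_size_add)
    ultimately show ?thesis using base_iff by blast
  qed
  define z where "z = v - unit_vec j"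
  have zv: "z + unit_vec j = v" unfolding z_def using j(3) by (intro sub_unit_add) simp
  have zP: "z \<in> P" using vP by (rule P_down') (simp add: z_def lookup_minus)
  define D where "D = {c\<in>E. z + unit_vec c \<notin> P}"
  have tD: "wsum D z = rho D" unfolding D_def using zP by (rule tight)
  have DE: "D \<subseteq> E" unfolding D_def by auto
  have fD: "finite D" using DE finE finite_subset by auto
  have jD: "j \<notin> D" unfolding D_def using zv vP by simp
  have iD: "i \<notin> D"
  proof
    assume iD: "i \<in> D"
    have wDv: "wsum D v = wsum D z"
      unfolding wsum_def using jD by (intro sum.cong refl) (auto simp: z_def lookup_minus lookup_unit_vec)
    have sm: "rho (U \<union> D) + rho (U \<inter> D) \<le> rho U + rho D" using submod[OF UE DE] .
    have ui: "wsum (U \<union> D) v + wsum (U \<inter> D) v = wsum U v + wsum D v"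
      unfolding wsum_def using fU fD by (rule sum.union_inter)
    have "wsum (U \<union> D) v \<le> rho (U \<union> D)" using rho_ge[OF vP] .
    then have "rho (U \<inter> D) \<le> wsum (U \<inter> D) v" using sm ui tU tD wDv by linarith
    then have "U \<inter> D \<in> S" unfolding S_def using rho_ge[OF vP, of "U \<inter> D"] UE iU iD by auto
    then have "card U \<le> card (U \<inter> D)" by (rule Umin)
    moreover have "card (U \<inter> D) < card U"
      using fU j(1) jD by (intro psubset_card_mono) auto
    ultimately show False by simp
  qed
  have zi: "z + unit_vec i \<in> bases P"
  proof -
    have "z + unit_vec i \<in> P" using iD iE unfolding D_def by simp
    moreover have "vec_size (z + unit_vec i) = rho E"
      using arg_cong[OF zv, of vec_size] sv by (simp add: vec_size_add)
    ultimately show ?thesis using base_iff by blast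
  qed
  show ?thesis using j(3) xj zi unfolding x_def z_def by blast
qed

end




definition Rel :: "('i \<Rightarrow>\<^sub>0 nat) set \<Rightarrow> 'k::comm_ring_1 itself \<Rightarrow> ('i \<Rightarrow>\<^sub>0 nat) multiset \<Rightarrow> ('i \<Rightarrow>\<^sub>0 nat) multiset \<Rightarrow> bool" where
  "Rel B K W W' \<longleftrightarrow> (mono (msmon W) - mono (msmon W') :: ('i,'k) ypoly) \<in> gen_ideal (poly_ring B) (double_swap_binomials B)"

lemma Rel_refl: "Rel B K W W"
  by (simp add: Rel_def)

lemma Rel_sym: "Rel B K W W' \<Longrightarrow> Rel B K W' W"
  unfolding Rel_def by (drule gen_ideal_uminus) simp

lemma Rel_trans: "Rel B K W1 W2 \<Longrightarrow> Rel B K W2 W3 \<Longrightarrow> Rel B K W1 W3"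
  unfolding Rel_def by (drule (1) gen_ideal_add) simp

lemma Rel_add: "set_mset T \<subseteq> B \<Longrightarrow> Rel B K W W' \<Longrightarrow> Rel B K (T + W) (T + W')"
  unfolding Rel_def
  by (drule (1) gen_ideal_mult[OF _ poly_ring_mono, rotated]) (simp add: msmon_add mono_add right_diff_distrib)

lemma Rel_ds:
  fixes x1 x2 y1 y2 :: "'i \<Rightarrow>\<^sub>0 nat" and K :: "'k::comm_ring_1 itself"
  shows "double_swap B x1 x2 y1 y2 \<Longrightarrow> Rel B K {#x1, x2#} {#y1, y2#}"
  unfolding Rel_def
proof -
  assume ds: "double_swap B x1 x2 y1 y2"
  have "(yvar x1 * yvar x2 - yvar y1 * yvar y2 :: ('i,'k) ypoly) \<in> double_swap_binomials B"
    unfolding double_swap_binomials_def using ds by blast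
  then have "1 * (yvar x1 * yvar x2 - yvar y1 * yvar y2 :: ('i,'k) ypoly) \<in> gen_ideal (poly_ring B) (double_swap_binomials B)"
    by (rule gen_ideal_gen) (rule one_poly_ring)
  then show "(mono (msmon {#x1, x2#}) - mono (msmon {#y1, y2#}) :: ('i,'k) ypoly) \<in> gen_ideal (poly_ring B) (double_swap_binomials B)"
    by (simp add: ds_binom_eq)
qed

locale lifted =
  fixes n :: nat and \<alpha> :: "nat \<Rightarrow> nat" and P :: "(nat \<Rightarrow>\<^sub>0 nat) set"
  assumes dpP: "discrete_polymatroid {1..n} P"

sublocale lifted \<subseteq> dpoly "{1..n}" P
  by unfold_locales (simp, fact dpP)

context lifted
begin

abbreviation "G \<equiv> lift_ground n \<alpha>"
abbreviation "BB \<equiv> bases P"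
abbreviation "BL \<equiv> lift_bases n \<alpha> P"

definition pr0 :: "(nat \<times> nat \<Rightarrow>\<^sub>0 nat) \<Rightarrow> (nat \<Rightarrow>\<^sub>0 nat)" where
  "pr0 w = Abs_poly_mapping (\<lambda>i. if i \<in> {1..n} then (\<Sum>a\<in>{1..\<alpha> i}. lookup w (i,a)) else 0)"

lemma lookup_pr0: "lookup (pr0 w) i = (if i \<in> {1..n} then (\<Sum>a\<in>{1..\<alpha> i}. lookup w (i,a)) else 0)"
proof -
  have "finite {i. (if i \<in> {1..n} then (\<Sum>a\<in>{1..\<alpha> i}. lookup w (i,a)) else 0) \<noteq> 0}"
    by (rule finite_subset[of _ "{1..n}"]) auto
  then show ?thesis unfolding pr0_def by simp
qed

lemma G_eq: "G = Sigma {1..n} (\<lambda>i. {1..\<alpha> i})"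
  unfolding lift_ground_def by auto

lemma G_fin: "finite G"
  unfolding G_eq by auto

lemma G_mem: "(i,a) \<in> G \<longleftrightarrow> i \<in> {1..n} \<and> a \<in> {1..\<alpha> i}"
  unfolding G_eq by auto

lemma BB_keys: "u \<in> BB \<Longrightarrow> keys u \<subseteq> {1..n}"
  using P_keys unfolding bases_def by auto

lemma lift_vec_pr0:
  assumes "keys u \<subseteq> {1..n}"
  shows "w \<in> lift_vec n \<alpha> u \<longleftrightarrow> keys w \<subseteq> G \<and> pr0 w = u"
proof
  assume w: "w \<in> lift_vec n \<alpha> u"
  have "pr0 w = u"
  proof (rule poly_mapping_eqI)
    fix i show "lookup (pr0 w) i = lookup u i"
      using w assms by (auto simp: lift_vec_def lookup_pr0 in_keys_iff)
  qed
  then show "keys w \<subseteq> G \<and> pr0 w = u" using w by (simp add: lift_vec_def)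
next
  assume "keys w \<subseteq> G \<and> pr0 w = u"
  then show "w \<in> lift_vec n \<alpha> u"
    unfolding lift_vec_def by (auto simp: lookup_pr0 simp flip: atLeastAtMost_iff)
qed

lemma BL_iff: "w \<in> BL \<longleftrightarrow> keys w \<subseteq> G \<and> pr0 w \<in> BB"
  unfolding lift_bases_def using lift_vec_pr0[OF BB_keys] by auto

lemma pr0_add: "pr0 (a + b) = pr0 a + pr0 b"
  by (rule poly_mapping_eqI) (simp add: lookup_pr0 lookup_add sum.distrib)

lemma pr0_zero[simp]: "pr0 0 = 0"
  by (rule poly_mapping_eqI) (simp add: lookup_pr0)

lemma pr0_unit: "p \<in> G \<Longrightarrow> pr0 (unit_vec p) = unit_vec (fst p)"
proof (rule poly_mapping_eqI)
  fix i assume pG: "p \<in> G"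
  obtain i0 a0 where p: "p = (i0, a0)" by force
  have i0: "i0 \<in> {1..n}" "a0 \<in> {1..\<alpha> i0}" using pG p G_mem by auto
  show "lookup (pr0 (unit_vec p)) i = lookup (unit_vec (fst p)) i"
    using i0 by (auto simp: lookup_pr0 lookup_unit_vec p)
qed

lemma pr0_sum_mset: "pr0 (sum_mset W) = sum_mset (image_mset pr0 W)"
  by (induction W) (simp_all add: pr0_add)

definition mv :: "(nat \<times> nat \<Rightarrow>\<^sub>0 nat) \<Rightarrow> nat \<times> nat \<Rightarrow> nat \<times> nat \<Rightarrow> (nat \<times> nat \<Rightarrow>\<^sub>0 nat)" where
  "mv x p c = x - unit_vec p + unit_vec c"

lemma lookup_mv: "1 \<le> lookup x p \<Longrightarrow> lookup (mv x p c) z = lookup x z - (if p = z then 1 else 0) + (if c = z then 1 else 0)"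
  by (simp add: mv_def lookup_add lookup_minus lookup_unit_vec)

lemma mv_add: "1 \<le> lookup x p \<Longrightarrow> mv x p c + unit_vec p = x + unit_vec c"
  by (rule poly_mapping_eqI) (auto simp: lookup_mv lookup_add lookup_unit_vec)

lemma keys_mv: "keys x \<subseteq> G \<Longrightarrow> c \<in> G \<Longrightarrow> keys (mv x p c) \<subseteq> G"
proof
  fix z assume x: "keys x \<subseteq> G" and c: "c \<in> G" and z: "z \<in> keys (mv x p c)"
  have "lookup (mv x p c) z \<noteq> 0" using z by (simp add: in_keys_iff)
  then have "lookup x z \<noteq> 0 \<or> z = c" by (auto simp: mv_def lookup_add lookup_minus lookup_unit_vec split: if_splits)
  then show "z \<in> G" using x c by (auto simp: in_keys_iff)
qed

lemma pr0_mv: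
  assumes "1 \<le> lookup x p" "p \<in> G" "c \<in> G"
  shows "pr0 (mv x p c) + unit_vec (fst p) = pr0 x + unit_vec (fst c)"
  using arg_cong[OF mv_add[OF assms(1), of c], of pr0] assms(2,3) by (simp add: pr0_add pr0_unit)

lemma mv_base:
  assumes x: "x \<in> BL" and p: "p \<in> G" and c: "c \<in> G" and xp: "1 \<le> lookup x p"
    and w: "w \<in> BB" and e: "w + unit_vec (fst p) = pr0 x + unit_vec (fst c)"
  shows "mv x p c \<in> BL \<and> pr0 (mv x p c) = w"
proof -
  have "pr0 (mv x p c) + unit_vec (fst p) = w + unit_vec (fst p)" using pr0_mv[OF xp p c] e by simp
  then have "pr0 (mv x p c) = w" by simp
  moreover have "keys (mv x p c) \<subseteq> G" using x c BL_iff keys_mv by blast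
  ultimately show ?thesis using w BL_iff by blast
qed

lemma mv_same_block:
  assumes x: "x \<in> BL" and p: "p \<in> G" and c: "c \<in> G" and xp: "1 \<le> lookup x p" and pc: "fst p = fst c"
  shows "mv x p c \<in> BL \<and> pr0 (mv x p c) = pr0 x"
  using mv_base[OF x p c xp, of "pr0 x"] x pc BL_iff by simp

lemma ds_mv:
  assumes "x1 \<in> BL" "x2 \<in> BL" "lookup x2 p < lookup x1 p" "lookup x1 c < lookup x2 c"
    "mv x1 p c \<in> BL" "mv x2 c p \<in> BL"
  shows "double_swap BL x1 x2 (mv x1 p c) (mv x2 c p)"
proof -
  have "mv x1 p c + unit_vec p = x1 + unit_vec c" by (rule mv_add) (use assms(3) in simp)
  moreover have "mv x2 c p + unit_vec c = x2 + unit_vec p" by (rule mv_add) (use assms(4) in simp)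
  ultimately show ?thesis unfolding double_swap_def using assms by blast
qed

lemma block_sum: "i \<in> {1..n} \<Longrightarrow> lookup (pr0 w) i = (\<Sum>a\<in>{1..\<alpha> i}. lookup w (i,a))"
  by (simp add: lookup_pr0)

lemma block_gt:
  assumes "lookup (pr0 y) i < lookup (pr0 x) i"
  shows "\<exists>a\<in>{1..\<alpha> i}. lookup y (i,a) < lookup x (i,a) \<and> (i,a) \<in> G"
proof (rule ccontr)
  assume na: "\<not> ?thesis"
  have i: "i \<in> {1..n}" using assms by (auto simp: lookup_pr0 split: if_splits)
  have "\<forall>a\<in>{1..\<alpha> i}. lookup x (i,a) \<le> lookup y (i,a)" using na i G_mem not_less by blast
  then have "lookup (pr0 x) i \<le> lookup (pr0 y) i" by (simp only: block_sum[OF i]) (rule sum_mono, blast)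
  then show False using assms by simp
qed

lemma block_pos:
  assumes "0 < lookup (pr0 x) i"
  shows "\<exists>a\<in>{1..\<alpha> i}. 0 < lookup x (i,a) \<and> (i,a) \<in> G"
  using block_gt[of 0 i x] assms by simp

end




lemma mset_two_update:
  assumes "k < length xs" "l < length xs" "k \<noteq> l" "z \<noteq> xs ! l"
  shows "mset (xs[k := a, l := b]) = {#a, b#} + (mset xs - {#xs!k#} - {#xs!l#})"
proof -
  define M where "M = mset xs - {#xs!k#}"
  have mz: "mset (xs[k := z]) = add_mset z M" unfolding M_def using assms(1) by (rule mset_update)
  have "xs ! l = xs[k := z] ! l" using assms(3) by simp
  also have "\<dots> \<in> set (xs[k := z])" using assms(2) by simp
  finally have "xs ! l \<in># add_mset z M" using mz by (metis set_mset_mset)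
  then have mem: "xs ! l \<in># M" using assms(4) by simp
  have ma: "mset (xs[k := a]) = add_mset a M" unfolding M_def using assms(1) by (rule mset_update)
  have "mset (xs[k := a, l := b]) = add_mset b (mset (xs[k := a]) - {#xs[k := a] ! l#})"
    using assms(2) by (simp add: mset_update)
  also have "\<dots> = add_mset b (add_mset a M - {#xs ! l#})" using ma assms(3) by simp
  also have "add_mset a M - {#xs ! l#} = add_mset a (M - {#xs ! l#})"
    using diff_union_single_conv[OF mem, of "{#a#}"] by simp
  finally show ?thesis unfolding M_def by simp
qed

context lifted
begin

lemma mv_mv_back: "1 \<le> lookup x p \<Longrightarrow> p \<noteq> q \<Longrightarrow> mv (mv x p q) q p = x"
  by (rule poly_mapping_eqI) (auto simp: lookup_mv)

lemma mv_mv_trans: "1 \<le> lookup x p \<Longrightarrow> p \<noteq> q \<Longrightarrow> mv (mv x p q) q c = mv x p c"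
  by (rule poly_mapping_eqI) (auto simp: lookup_mv)

lemma GS3a:
  fixes K :: "'k::comm_ring_1 itself"
  assumes x: "x \<in> BL" and y: "y \<in> BL" and p: "p \<in> G" and q: "q \<in> G"
    and pq: "fst p = fst q" "p \<noteq> q"
    and xp2: "lookup y p + 2 \<le> lookup x p" and xq: "lookup y q \<le> lookup x q" and yq: "1 \<le> lookup y q"
  shows "Rel BL K {#x, y#} {#mv x p q, mv y q p#}"
proof -
  have xp: "1 \<le> lookup x p" using xp2 by simp
  obtain c where c: "c \<in> G" "lookup x c < lookup y c" "mv x p c \<in> BL" "mv y c p \<in> BL"
  proof (cases "\<exists>c\<in>G. fst c = fst p \<and> lookup x c < lookup y c")
    case True
    then obtain c where c: "c \<in> G" "fst c = fst p" "lookup x c < lookup y c" by blast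
    have "mv x p c \<in> BL" using mv_same_block[OF x p c(1) xp] c(2) by simp
    moreover have "mv y c p \<in> BL" using mv_same_block[OF y c(1) p] c(2,3) by simp
    ultimately show ?thesis using that c by blast
  next
    case False
    obtain i a where pia: "p = (i, a)" by force
    have iG: "i \<in> {1..n}" "a \<in> {1..\<alpha> i}" using p pia G_mem by auto
    have le: "\<forall>b\<in>{1..\<alpha> i}. lookup y (i, b) \<le> lookup x (i, b)"
      using False pia G_mem iG by (auto simp: not_less)
    have ex: "\<exists>b\<in>{1..\<alpha> i}. lookup y (i,b) < lookup x (i,b)" using iG xp2 pia by force
    have "lookup (pr0 y) i < lookup (pr0 x) i"
      unfolding block_sum[OF iG(1)] by (intro sum_strict_mono_ex1) (use le ex in auto)
    moreover have u: "pr0 x \<in> BB" and v: "pr0 y \<in> BB" using x y BL_iff by auto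
    ultimately obtain j where j: "lookup (pr0 x) j < lookup (pr0 y) j"
      "(pr0 x - unit_vec i) + unit_vec j \<in> BB" "(pr0 y - unit_vec j) + unit_vec i \<in> BB"
      using sym_exchange by blast
    obtain b where b: "b \<in> {1..\<alpha> j}" "lookup x (j, b) < lookup y (j, b)" "(j, b) \<in> G"
      using block_gt[OF j(1)] by blast
    have ui: "1 \<le> lookup (pr0 x) i" using \<open>lookup (pr0 y) i < lookup (pr0 x) i\<close> by simp
    have vj: "1 \<le> lookup (pr0 y) j" using j(1) by simp
    have e1: "((pr0 x - unit_vec i) + unit_vec j) + unit_vec (fst p) = pr0 x + unit_vec (fst (j, b))"
    proof -
      have "((pr0 x - unit_vec i) + unit_vec j) + unit_vec (fst p) = ((pr0 x - unit_vec i) + unit_vec i) + unit_vec j"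
        using pia by (simp add: ac_simps)
      also have "\<dots> = pr0 x + unit_vec j" using sub_unit_add[OF ui] by simp
      finally show ?thesis by simp
    qed
    have e2: "((pr0 y - unit_vec j) + unit_vec i) + unit_vec (fst (j, b)) = pr0 y + unit_vec (fst p)"
    proof -
      have "((pr0 y - unit_vec j) + unit_vec i) + unit_vec (fst (j, b)) = ((pr0 y - unit_vec j) + unit_vec j) + unit_vec i"
        by (simp add: ac_simps)
      also have "\<dots> = pr0 y + unit_vec (fst p)" using sub_unit_add[OF vj] pia by simp
      finally show ?thesis .
    qed
    have "mv x p (j, b) \<in> BL" using mv_base[OF x p b(3) xp j(2) e1] by simp
    moreover have "mv y (j, b) p \<in> BL" using mv_base[OF y b(3) p _ j(3) e2] b(2) by simp
    ultimately show ?thesis using that b by blast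
  qed
  have cp: "c \<noteq> p" using c(2) xp2 by auto
  have cq: "c \<noteq> q" using c(2) xq by auto
  have yc: "1 \<le> lookup y c" using c(2) by simp
  define x' where "x' = mv x p q"
  define y' where "y' = mv y q p"
  have x'B: "x' \<in> BL" unfolding x'_def using mv_same_block[OF x p q xp pq(1)] by simp
  have y'B: "y' \<in> BL" unfolding y'_def using mv_same_block[OF y q p yq] pq(1) by simp
  have r1: "Rel BL K {#x, y#} {#mv x p c, mv y c p#}"
    by (rule Rel_ds, rule ds_mv) (use x y xp2 c in auto)
  have ex: "mv x' q c = mv x p c" unfolding x'_def using xp pq(2) by (rule mv_mv_trans)
  have ey: "mv y' c q = mv y c p"
    unfolding y'_def by (rule poly_mapping_eqI) (use yq yc cq cp pq(2) in \<open>auto simp: lookup_mv\<close>)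
  have r2: "Rel BL K {#x', y'#} {#mv x' q c, mv y' c q#}"
  proof (rule Rel_ds, rule ds_mv)
    show "lookup y' q < lookup x' q" unfolding x'_def y'_def using xp yq xq pq(2) by (simp add: lookup_mv; linarith)
    show "lookup x' c < lookup y' c" unfolding x'_def y'_def using xp yq c(2) cp cq by (simp add: lookup_mv; linarith)
  qed (use x'B y'B ex ey c in auto)
  have r2': "Rel BL K {#mv x p c, mv y c p#} {#x', y'#}" using Rel_sym[OF r2] ex ey by simp
  show ?thesis using Rel_trans[OF r1 r2'] unfolding x'_def y'_def .
qed

lemma GS:
  fixes K :: "'k::comm_ring_1 itself"
  assumes x: "x \<in> BL" and y: "y \<in> BL" and p: "p \<in> G" and q: "q \<in> G"
    and pq: "fst p = fst q" "p \<noteq> q" and xp: "1 \<le> lookup x p" and yq: "1 \<le> lookup y q"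
  shows "Rel BL K {#x, y#} {#mv x p q, mv y q p#}"
proof -
  define x' where "x' = mv x p q"
  define y' where "y' = mv y q p"
  have x'B: "x' \<in> BL" unfolding x'_def using mv_same_block[OF x p q xp pq(1)] by simp
  have y'B: "y' \<in> BL" unfolding y'_def using mv_same_block[OF y q p yq] pq(1) by simp
  consider "lookup y p < lookup x p \<and> lookup x q < lookup y q"
    | "lookup y q < lookup x q + 2 \<and> lookup x p < lookup y p + 2"
    | "lookup y p + 2 \<le> lookup x p \<and> lookup y q \<le> lookup x q"
    | "lookup x p \<le> lookup y p \<and> lookup x q + 2 \<le> lookup y q"
    by linarith
  then show ?thesis
  proof cases
    case 1
    show ?thesis by (rule Rel_ds, rule ds_mv) (use 1 x y x'B y'B in \<open>auto simp: x'_def y'_def\<close>)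
  next
    case 2
    have bx: "mv x' q p = x" unfolding x'_def using xp pq(2) by (rule mv_mv_back)
    have by': "mv y' p q = y" unfolding y'_def using yq pq(2) by (intro mv_mv_back) auto
    have "Rel BL K {#x', y'#} {#mv x' q p, mv y' p q#}"
    proof (rule Rel_ds, rule ds_mv)
      show "lookup y' q < lookup x' q" unfolding x'_def y'_def using 2 xp yq pq(2) by (simp add: lookup_mv; linarith)
      show "lookup x' p < lookup y' p" unfolding x'_def y'_def using 2 xp yq pq(2) by (simp add: lookup_mv; linarith)
    qed (use x'B y'B bx by' x y in auto)
    then show ?thesis using bx by' Rel_sym unfolding x'_def y'_def by metis
  next
    case 3
    show ?thesis using GS3a[OF x y p q pq] 3 yq by simp
  next
    case 4
    have "Rel BL K {#y, x#} {#mv y q p, mv x p q#}"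
      using GS3a[OF y x q p pq(1)[symmetric] pq(2)[symmetric]] 4 xp by simp
    then show ?thesis by (simp add: add_mset_commute)
  qed
qed

end




lemma sum_ind: "finite S \<Longrightarrow> k \<in> S \<Longrightarrow> (\<Sum>x\<in>S. f x + (if x = k then 1 else 0)) = (\<Sum>x\<in>S. f x) + (1::nat)"
  by (simp add: sum.distrib)

context lifted
begin

lemma lookup_sum_list: "lookup (sum_list xs) z = (\<Sum>k<length xs. lookup (xs!k) z)"
  by (simp add: sum_list_sum_nth lookup_sum atLeast0LessThan)

definition meas :: "(nat \<times> nat \<Rightarrow>\<^sub>0 nat) list \<Rightarrow> (nat \<times> nat \<Rightarrow>\<^sub>0 nat) list \<Rightarrow> nat" where
  "meas xs ys = (\<Sum>k<length xs. \<Sum>c\<in>G. lookup (xs!k) c - lookup (ys!k) c)"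

lemma fiber_list:
  fixes K :: "'k::comm_ring_1 itself"
  shows "length xs = length ys \<Longrightarrow> set xs \<subseteq> BL \<Longrightarrow> set ys \<subseteq> BL \<Longrightarrow> (\<forall>k<length xs. pr0 (xs!k) = pr0 (ys!k))
    \<Longrightarrow> sum_list xs = sum_list ys \<Longrightarrow> Rel BL K (mset xs) (mset ys)"
proof (induction "meas xs ys" arbitrary: xs rule: less_induct)
  case less
  note len = less.prems(1) and sx = less.prems(2) and sy = less.prems(3) and pr = less.prems(4) and sl = less.prems(5)
  have xsBL: "xs!k \<in> BL" if "k < length xs" for k using sx that by auto
  have ysBL: "ys!k \<in> BL" if "k < length xs" for k using sy len that by auto
  have colsum: "(\<Sum>k<length xs. lookup (xs!k) z) = (\<Sum>k<length xs. lookup (ys!k) z)" for z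
    using arg_cong[OF sl, of "\<lambda>s. lookup s z"] len by (simp add: lookup_sum_list)
  have blk: "(\<Sum>b\<in>{1..\<alpha> i}. lookup (xs!k) (i,b)) = (\<Sum>b\<in>{1..\<alpha> i}. lookup (ys!k) (i,b))"
    if "k < length xs" "i \<in> {1..n}" for k i
    using arg_cong[OF pr[rule_format, OF that(1)], of "\<lambda>s. lookup s i"] block_sum[OF that(2)] by simp
  show ?case
  proof (cases "\<exists>k<length xs. \<exists>c\<in>G. lookup (ys!k) c < lookup (xs!k) c")
    case False
    have "xs ! k = ys ! k" if k: "k < length xs" for k
    proof (rule poly_mapping_eqI)
      fix z
      show "lookup (xs!k) z = lookup (ys!k) z"
      proof (cases "z \<in> G")
        case False
        have "keys (xs!k) \<subseteq> G" "keys (ys!k) \<subseteq> G" using xsBL[OF k] ysBL[OF k] BL_iff by auto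
        then have "z \<notin> keys (xs!k)" "z \<notin> keys (ys!k)" using False by blast+
        then show ?thesis by (simp add: in_keys_iff)
      next
        case True
        obtain i a where z: "z = (i,a)" by force
        have ia: "i \<in> {1..n}" "a \<in> {1..\<alpha> i}" using True z G_mem by auto
        have le: "\<forall>b\<in>{1..\<alpha> i}. lookup (xs!k) (i,b) \<le> lookup (ys!k) (i,b)"
        proof
          fix b assume bb: "b \<in> {1..\<alpha> i}"
          have "(i,b) \<in> G" using G_mem ia bb by auto
          then show "lookup (xs!k) (i,b) \<le> lookup (ys!k) (i,b)" using False k not_less by blast
        qed
        show ?thesis
        proof (rule ccontr)
          assume ne: "lookup (xs!k) z \<noteq> lookup (ys!k) z"
          then have lt: "lookup (xs!k) (i,a) < lookup (ys!k) (i,a)" using le ia z by fastforce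
          have "(\<Sum>b\<in>{1..\<alpha> i}. lookup (xs!k) (i,b)) < (\<Sum>b\<in>{1..\<alpha> i}. lookup (ys!k) (i,b))"
            by (rule sum_strict_mono_ex1) (use le ia lt in auto)
          then show False using blk[OF k ia(1)] by simp
        qed
      qed
    qed
    then have "xs = ys" using len by (intro nth_equalityI) auto
    then show ?thesis by (simp add: Rel_refl)
  next
    case True
    then obtain k c where k: "k < length xs" and c: "c \<in> G" "lookup (ys!k) c < lookup (xs!k) c" by blast
    obtain i a where cia: "c = (i,a)" by force
    have ia: "i \<in> {1..n}" "a \<in> {1..\<alpha> i}" using c(1) cia G_mem by auto
    have "\<exists>b\<in>{1..\<alpha> i}. lookup (xs!k) (i,b) < lookup (ys!k) (i,b)"
    proof (rule ccontr)
      assume "\<not> ?thesis"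
      then have le: "\<forall>b\<in>{1..\<alpha> i}. lookup (ys!k) (i,b) \<le> lookup (xs!k) (i,b)" by (auto simp: not_less)
      have "(\<Sum>b\<in>{1..\<alpha> i}. lookup (ys!k) (i,b)) < (\<Sum>b\<in>{1..\<alpha> i}. lookup (xs!k) (i,b))"
        by (rule sum_strict_mono_ex1) (use le ia c cia in auto)
      then show False using blk[OF k ia(1)] by simp
    qed
    then obtain b where b: "b \<in> {1..\<alpha> i}" "lookup (xs!k) (i,b) < lookup (ys!k) (i,b)" by blast
    define q where "q = (i, b)"
    have qG: "q \<in> G" unfolding q_def using ia b G_mem by auto
    have "\<exists>l<length xs. lookup (ys!l) q < lookup (xs!l) q"
    proof (rule ccontr)
      assume "\<not> ?thesis"
      then have le: "\<forall>l\<in>{..<length xs}. lookup (xs!l) q \<le> lookup (ys!l) q"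
        using not_less lessThan_iff by metis
      have "(\<Sum>l<length xs. lookup (xs!l) q) < (\<Sum>l<length xs. lookup (ys!l) q)"
        by (rule sum_strict_mono_ex1) (use le k b in \<open>auto simp: q_def\<close>)
      then show False using colsum[of q] by simp
    qed
    then obtain l where l: "l < length xs" "lookup (ys!l) q < lookup (xs!l) q" by blast
    have lk: "l \<noteq> k" using l(2) b unfolding q_def by auto
    have cq: "c \<noteq> q" using c(2) b unfolding q_def cia by auto
    have fcq: "fst c = fst q" unfolding q_def cia by simp
    have xk1: "1 \<le> lookup (xs!k) c" using c(2) by simp
    have xl1: "1 \<le> lookup (xs!l) q" using l(2) by simp
    define nk where "nk = mv (xs!k) c q"
    define nl where "nl = mv (xs!l) q c"
    have GSr: "Rel BL K {#xs!k, xs!l#} {#nk, nl#}"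
      unfolding nk_def nl_def using GS[OF xsBL[OF k] xsBL[OF l(1)] c(1) qG fcq cq xk1 xl1] .
    have nkB: "nk \<in> BL" "pr0 nk = pr0 (xs!k)" unfolding nk_def using mv_same_block[OF xsBL[OF k] c(1) qG xk1 fcq] by auto
    have nlB: "nl \<in> BL" "pr0 nl = pr0 (xs!l)" unfolding nl_def using mv_same_block[OF xsBL[OF l(1)] qG c(1) xl1 fcq[symmetric]] by auto
    define xs' where "xs' = xs[k := nk, l := nl]"
    have zne: "xs!l + unit_vec c \<noteq> xs!l"
    proof
      assume "xs!l + unit_vec c = xs!l"
      then have "lookup (xs!l + unit_vec c) c = lookup (xs!l) c" by simp
      then show False by (simp add: lookup_add lookup_unit_vec)
    qed
    define R where "R = mset xs - {#xs!k#} - {#xs!l#}"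
    have ms': "mset xs' = {#nk, nl#} + R" unfolding xs'_def R_def using k l(1) lk[symmetric] zne by (rule mset_two_update)
    have ms: "mset xs = {#xs!k, xs!l#} + R"
      using mset_two_update[OF k l(1) lk[symmetric] zne, of "xs!k" "xs!l"] unfolding R_def by simp
    have RB: "set_mset R \<subseteq> BL"
    proof -
      have "set_mset R \<subseteq> set_mset (mset xs)" unfolding R_def by (meson in_diffD subsetI)
      then show ?thesis using sx by auto
    qed
    have r1: "Rel BL K (mset xs) (mset xs')"
      unfolding ms ms' using Rel_add[OF RB GSr] by (simp add: add.commute)
    have sum2: "nk + nl = xs!k + xs!l"
    proof -
      have "(nk + nl) + (unit_vec c + unit_vec q) = (xs!k + xs!l) + (unit_vec c + unit_vec q)"
        using mv_add[OF xk1, of q] mv_add[OF xl1, of c] unfolding nk_def nl_def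
        by (metis (no_types, lifting) add.assoc add.commute)
      then show ?thesis by simp
    qed
    have len': "length xs' = length ys" unfolding xs'_def using len by simp
    have nth': "xs'!j = (if j = l then nl else if j = k then nk else xs!j)" if "j < length xs" for j
      unfolding xs'_def using that lk by auto
    have sx': "set xs' \<subseteq> BL"
      unfolding xs'_def using set_update_subset_insert[of "xs[k := nk]" l nl] set_update_subset_insert[of xs k nk] sx nkB nlB
      by auto
    have pr': "\<forall>j<length xs'. pr0 (xs'!j) = pr0 (ys!j)"
      using pr nth' nkB nlB k l by (auto simp: xs'_def)
    have sl': "sum_list xs' = sum_list ys"
    proof -
      have "sum_list xs' = sum_mset (mset xs')" by (simp add: sum_mset_sum_list)
      also have "\<dots> = nk + nl + sum_mset R" unfolding ms' by (simp add: add.assoc)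
      also have "\<dots> = xs!k + xs!l + sum_mset R" using sum2 by simp
      also have "\<dots> = sum_mset (mset xs)" unfolding ms by (simp add: add.assoc)
      also have "\<dots> = sum_list ys" using sl by (simp add: sum_mset_sum_list)
      finally show ?thesis .
    qed
    define h where "h j w = (\<Sum>c'\<in>G. lookup w c' - lookup (ys!j) c')" for j w
    have mx: "meas xs ys = (\<Sum>j<length xs. h j (xs!j))" unfolding meas_def h_def by simp
    have mx': "meas xs' ys = (\<Sum>j<length xs. h j (xs'!j))" unfolding meas_def h_def xs'_def by simp
    have pw: "h j (xs'!j) + (if j = k then 1 else 0) \<le> h j (xs!j)" if j: "j < length xs" for j
    proof -
      consider "j = k" | "j = l" | "j \<noteq> k" "j \<noteq> l" by blast
      then show ?thesis
      proof cases
        case 1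
        have "h j (xs'!j) + 1 = (\<Sum>c'\<in>G. (lookup nk c' - lookup (ys!k) c') + (if c' = c then 1 else 0))"
          unfolding h_def using nth'[OF j] 1 lk sum_ind[OF G_fin c(1)] by simp
        also have "\<dots> \<le> (\<Sum>c'\<in>G. lookup (xs!k) c' - lookup (ys!k) c')"
          by (rule sum_mono) (use c(2) b xk1 cq in \<open>auto simp: nk_def lookup_mv q_def\<close>)
        finally show ?thesis unfolding h_def using 1 by simp
      next
        case 2
        have "h j (xs'!j) + 1 = (\<Sum>c'\<in>G. (lookup nl c' - lookup (ys!l) c') + (if c' = q then 1 else 0))"
          unfolding h_def using nth'[OF j] 2 sum_ind[OF G_fin qG] by simp
        also have "\<dots> \<le> (\<Sum>c'\<in>G. (lookup (xs!l) c' - lookup (ys!l) c') + (if c' = c then 1 else 0))"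
          by (rule sum_mono) (use l(2) xl1 cq in \<open>auto simp: nl_def lookup_mv\<close>)
        also have "\<dots> = h j (xs!j) + 1" unfolding h_def using 2 sum_ind[OF G_fin c(1)] by simp
        finally show ?thesis using 2 lk by simp
      next
        case 3
        then show ?thesis using nth'[OF j] by simp
      qed
    qed
    have "meas xs' ys + 1 = (\<Sum>j<length xs. h j (xs'!j) + (if j = k then 1 else 0))"
      unfolding mx' using sum_ind[of "{..<length xs}" k] k by simp
    also have "\<dots> \<le> meas xs ys" unfolding mx by (rule sum_mono) (use pw in auto)
    finally have lt: "meas xs' ys < meas xs ys" by simp
    have r2: "Rel BL K (mset xs') (mset ys)"
      using less.hyps[OF lt len' sx' sy pr' sl'] .
    show ?thesis using Rel_trans[OF r1 r2] .
  qed
qed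

end




lemma match_lists: "image_mset f (mset xs) = image_mset f N \<Longrightarrow> \<exists>ys. mset ys = N \<and> map f ys = map f xs"
proof (induction xs arbitrary: N)
  case Nil
  then show ?case by simp
next
  case (Cons x xs)
  then have "image_mset f N = add_mset (f x) (image_mset f (mset xs))" by simp
  then obtain N1 a where N: "N = add_mset a N1" "f a = f x" "image_mset f N1 = image_mset f (mset xs)"
    using msed_map_invR by metis
  obtain ys where "mset ys = N1" "map f ys = map f xs" using Cons.IH[OF N(3)[symmetric]] by blast
  then show ?case using N by (intro exI[of _ "a # ys"]) simp
qed

context lifted
begin

lemma fiber_ms:
  fixes K :: "'k::comm_ring_1 itself"
  assumes "set_mset W \<subseteq> BL" "set_mset W' \<subseteq> BL" "image_mset pr0 W = image_mset pr0 W'" "sum_mset W = sum_mset W'"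
  shows "Rel BL K W W'"
proof -
  obtain xs where xs: "mset xs = W" using ex_mset by blast
  obtain ys where ys: "mset ys = W'" "map pr0 ys = map pr0 xs"
    using match_lists[of pr0 xs W'] assms(3) xs by auto
  have len: "length xs = length ys" using ys(2) by (metis length_map)
  have pr: "\<forall>k<length xs. pr0 (xs!k) = pr0 (ys!k)"
    using ys(2) len by (metis nth_map)
  have "Rel BL K (mset xs) (mset ys)"
    by (rule fiber_list[OF len]) (use assms xs ys pr in \<open>auto simp flip: sum_mset_sum_list\<close>)
  then show ?thesis using xs ys by simp
qed

lemma forward_lift:
  assumes x1: "x1 \<in> BL" and x2: "x2 \<in> BL" and ds: "double_swap BB (pr0 x1) (pr0 x2) v1 v2"
  shows "\<exists>y1 y2. double_swap BL x1 x2 y1 y2 \<and> pr0 y1 = v1 \<and> pr0 y2 = v2"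
proof -
  obtain i j where ij: "lookup (pr0 x2) i < lookup (pr0 x1) i" "lookup (pr0 x1) j < lookup (pr0 x2) j"
     "v1 + unit_vec i = pr0 x1 + unit_vec j" "v2 + unit_vec j = pr0 x2 + unit_vec i"
    using ds unfolding double_swap_def by blast
  have vB: "v1 \<in> BB" "v2 \<in> BB" using ds unfolding double_swap_def by auto
  obtain a where a: "lookup x2 (i,a) < lookup x1 (i,a)" "(i,a) \<in> G" using block_gt[OF ij(1)] by blast
  obtain b where b: "lookup x1 (j,b) < lookup x2 (j,b)" "(j,b) \<in> G" using block_gt[OF ij(2)] by blast
  have y1: "mv x1 (i,a) (j,b) \<in> BL \<and> pr0 (mv x1 (i,a) (j,b)) = v1"
    by (rule mv_base[OF x1 a(2) b(2) _ vB(1)]) (use a(1) ij(3) in auto)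
  have y2: "mv x2 (j,b) (i,a) \<in> BL \<and> pr0 (mv x2 (j,b) (i,a)) = v2"
    by (rule mv_base[OF x2 b(2) a(2) _ vB(2)]) (use b(1) ij(4) in auto)
  have "double_swap BL x1 x2 (mv x1 (i,a) (j,b)) (mv x2 (j,b) (i,a))"
    by (rule ds_mv) (use x1 x2 a b y1 y2 in auto)
  then show ?thesis using y1 y2 by blast
qed

lemma decomp2:
  assumes "image_mset pr0 W = T + {#u1, u2#}"
  shows "\<exists>x1 x2 Wb. W = Wb + {#x1, x2#} \<and> pr0 x1 = u1 \<and> pr0 x2 = u2 \<and> image_mset pr0 Wb = T"
proof -
  have "image_mset pr0 W = add_mset u1 (add_mset u2 T)" using assms by simp
  then obtain Wa x1 where a: "W = add_mset x1 Wa" "pr0 x1 = u1" "image_mset pr0 Wa = add_mset u2 T"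
    using msed_map_invR by metis
  then obtain Wb x2 where b: "Wa = add_mset x2 Wb" "pr0 x2 = u2" "image_mset pr0 Wb = T"
    using msed_map_invR by metis
  show ?thesis using a b by (intro exI[of _ x1] exI[of _ x2] exI[of _ Wb]) simp
qed

lemma lift_path:
  fixes K :: "'k::comm_ring_1 itself"
  assumes "(sedge BB)\<^sup>*\<^sup>* M N"
  shows "set_mset W \<subseteq> BL \<Longrightarrow> image_mset pr0 W = M \<Longrightarrow>
    \<exists>W'. set_mset W' \<subseteq> BL \<and> image_mset pr0 W' = N \<and> sum_mset W' = sum_mset W \<and> Rel BL K W W'"
  using assms
proof (induction rule: rtranclp_induct)
  case base
  then show ?case using Rel_refl by blast
next
  case (step N1 N2)
  from step.IH[OF step.prems] obtain W1 where W1: "set_mset W1 \<subseteq> BL" "image_mset pr0 W1 = N1"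
    "sum_mset W1 = sum_mset W" "Rel BL K W W1" by blast
  from step.hyps(2) have "ds_edge BB N1 N2 \<or> ds_edge BB N2 N1" by (simp add: sedge_def)
  then obtain W2 where W2: "set_mset W2 \<subseteq> BL" "image_mset pr0 W2 = N2" "sum_mset W2 = sum_mset W1" "Rel BL K W1 W2"
  proof (elim disjE)
    assume "ds_edge BB N1 N2"
    then obtain T u1 u2 v1 v2 where ds: "double_swap BB u1 u2 v1 v2" "N1 = T + {#u1,u2#}" "N2 = T + {#v1,v2#}"
      unfolding ds_edge_def by blast
    obtain x1 x2 Wb where d: "W1 = Wb + {#x1, x2#}" "pr0 x1 = u1" "pr0 x2 = u2" "image_mset pr0 Wb = T"
      using decomp2[of W1 T u1 u2] W1(2) ds(2) by blast
    have xB: "x1 \<in> BL" "x2 \<in> BL" "set_mset Wb \<subseteq> BL" using W1(1) d(1) by auto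
    obtain y1 y2 where y: "double_swap BL x1 x2 y1 y2" "pr0 y1 = v1" "pr0 y2 = v2"
      using forward_lift[OF xB(1,2)] ds(1) d(2,3) by blast
    have yB: "y1 \<in> BL" "y2 \<in> BL" using y(1) unfolding double_swap_def by auto
    have "set_mset (Wb + {#y1, y2#}) \<subseteq> BL" using xB yB by auto
    moreover have "image_mset pr0 (Wb + {#y1, y2#}) = N2" using d(4) y(2,3) ds(3) by simp
    moreover have "sum_mset (Wb + {#y1, y2#}) = sum_mset W1" using ds_sum[OF y(1)] d(1) by (simp add: add.assoc[symmetric])
    moreover have "Rel BL K W1 (Wb + {#y1, y2#})" unfolding d(1) by (rule Rel_add[OF xB(3) Rel_ds[OF y(1)]])
    ultimately show ?thesis using that by blast
  next
    assume "ds_edge BB N2 N1"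
    then obtain T u1 u2 v1 v2 where ds: "double_swap BB u1 u2 v1 v2" "N2 = T + {#u1,u2#}" "N1 = T + {#v1,v2#}"
      unfolding ds_edge_def by blast
    obtain x1 x2 Wb where d: "W1 = Wb + {#x1, x2#}" "pr0 x1 = v1" "pr0 x2 = v2" "image_mset pr0 Wb = T"
      using decomp2[of W1 T v1 v2] W1(2) ds(3) by blast
    have xB: "x1 \<in> BL" "x2 \<in> BL" "set_mset Wb \<subseteq> BL" using W1(1) d(1) by auto
    obtain i j where ij: "lookup u2 i < lookup u1 i" "lookup u1 j < lookup u2 j"
      "v1 + unit_vec i = u1 + unit_vec j" "v2 + unit_vec j = u2 + unit_vec i"
      using ds(1) unfolding double_swap_def by blast
    have uB: "u1 \<in> BB" "u2 \<in> BB" using ds(1) unfolding double_swap_def by auto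
    have ijne: "i \<noteq> j" using ij(1,2) by auto
    have "lookup (v1 + unit_vec i) j = lookup (u1 + unit_vec j) j" using ij(3) by simp
    then have v1j: "0 < lookup (pr0 x1) j" using ijne d(2) by (simp add: lookup_add lookup_unit_vec)
    have "lookup (v2 + unit_vec j) i = lookup (u2 + unit_vec i) i" using ij(4) by simp
    then have v2i: "0 < lookup (pr0 x2) i" using ijne d(3) by (simp add: lookup_add lookup_unit_vec)
    obtain b where b: "0 < lookup x1 (j,b)" "(j,b) \<in> G" using block_pos[OF v1j] by blast
    obtain a where a: "0 < lookup x2 (i,a)" "(i,a) \<in> G" using block_pos[OF v2i] by blast
    define z1 where "z1 = mv x1 (j,b) (i,a)"
    define z2 where "z2 = mv x2 (i,a) (j,b)"
    have z1: "z1 \<in> BL \<and> pr0 z1 = u1" unfolding z1_def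
      by (rule mv_base[OF xB(1) b(2) a(2) _ uB(1)]) (simp_all add: Suc_le_eq b(1) d(2) ij(3)[symmetric])
    have z2: "z2 \<in> BL \<and> pr0 z2 = u2" unfolding z2_def
      by (rule mv_base[OF xB(2) a(2) b(2) _ uB(2)]) (simp_all add: Suc_le_eq a(1) d(3) ij(4)[symmetric])
    have zsum: "z1 + z2 = x1 + x2"
    proof -
      have m1: "z1 + unit_vec (j,b) = x1 + unit_vec (i,a)" unfolding z1_def using b(1) by (intro mv_add) simp
      have m2: "z2 + unit_vec (i,a) = x2 + unit_vec (j,b)" unfolding z2_def using a(1) by (intro mv_add) simp
      have "(z1 + z2) + (unit_vec (j,b) + unit_vec (i,a)) = (z1 + unit_vec (j,b)) + (z2 + unit_vec (i,a))"
        by (simp add: ac_simps)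
      also have "\<dots> = (x1 + x2) + (unit_vec (j,b) + unit_vec (i,a))" unfolding m1 m2 by (simp add: ac_simps)
      finally have "(z1 + z2) + (unit_vec (j,b) + unit_vec (i,a)) = (x1 + x2) + (unit_vec (j,b) + unit_vec (i,a))" .
      then show ?thesis by simp
    qed
    obtain y1 y2 where y: "double_swap BL z1 z2 y1 y2" "pr0 y1 = v1" "pr0 y2 = v2"
      using forward_lift[of z1 z2 v1 v2] z1 z2 ds(1) by blast
    have yB: "y1 \<in> BL" "y2 \<in> BL" using y(1) unfolding double_swap_def by auto
    have ysum: "y1 + y2 = x1 + x2" using ds_sum[OF y(1)] zsum by simp
    have rf: "Rel BL K {#y1, y2#} {#x1, x2#}"
      by (rule fiber_ms) (use yB xB y(2,3) d(2,3) ysum in auto)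
    have rz: "Rel BL K {#x1, x2#} {#z1, z2#}"
      using Rel_sym[OF Rel_trans[OF Rel_ds[OF y(1)] rf]] .
    have "set_mset (Wb + {#z1, z2#}) \<subseteq> BL" using xB z1 z2 by auto
    moreover have "image_mset pr0 (Wb + {#z1, z2#}) = N2" using d(4) z1 z2 ds(2) by simp
    moreover have "sum_mset (Wb + {#z1, z2#}) = sum_mset W1" using zsum d(1) by (simp add: add.assoc[symmetric])
    moreover have "Rel BL K W1 (Wb + {#z1, z2#})" unfolding d(1) by (rule Rel_add[OF xB(3) rz])
    ultimately show ?thesis using that by blast
  qed
  then show ?case using W1 Rel_trans[OF W1(4) W2(4)] by (intro exI[of _ W2]) simp
qed

lemma main_rel:
  fixes K :: "'k::comm_ring_1 itself"
  assumes hyp: "(toric_ideal BB :: (nat,'k) ypoly set) = gen_ideal (poly_ring BB) (double_swap_binomials BB)"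
    and W1: "set_mset W1 \<subseteq> BL" and W2: "set_mset W2 \<subseteq> BL" and s: "sum_mset W1 = sum_mset W2"
  shows "Rel BL K W1 W2"
proof -
  define M1 where "M1 = image_mset pr0 W1"
  define M2 where "M2 = image_mset pr0 W2"
  have M1B: "set_mset M1 \<subseteq> BB" unfolding M1_def using W1 BL_iff by auto
  have M2B: "set_mset M2 \<subseteq> BB" unfolding M2_def using W2 BL_iff by auto
  have sM: "sum_mset M1 = sum_mset M2" unfolding M1_def M2_def using s by (simp flip: pr0_sum_mset)
  have "(mono (msmon M1) - mono (msmon M2) :: (nat,'k) ypoly) \<in> toric_ideal BB"
    unfolding toric_ideal_def using M1B M2B sM
    by (auto intro!: poly_ring_diff poly_ring_mono simp: toric_map_diff toric_map_mono)
  then have "(mono (msmon M1) - mono (msmon M2) :: (nat,'k) ypoly) \<in> gen_ideal (poly_ring BB) (double_swap_binomials BB)"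
    using hyp by simp
  then have conn: "(sedge BB)\<^sup>*\<^sup>* M1 M2" by (rule conn_from_ideal)
  obtain W' where W': "set_mset W' \<subseteq> BL" "image_mset pr0 W' = M2" "sum_mset W' = sum_mset W1" "Rel BL K W1 W'"
    using lift_path[OF conn, of W1 K] W1 M1_def by blast
  have "Rel BL K W' W2" by (rule fiber_ms) (use W' W2 s M2_def in auto)
  then show ?thesis using Rel_trans[OF W'(4)] by blast
qed

end

theorem theorem2p4:
  fixes n :: nat and \<alpha> :: "nat \<Rightarrow> nat" and P :: "(nat \<Rightarrow>\<^sub>0 nat) set"
    and K :: "'k::field itself"
  assumes "\<forall>i\<in>{1..n}. \<alpha> i \<ge> 1"
    and "discrete_polymatroid {1..n} P"
    and "generated_by_double_swaps (bases P) K"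
  shows "generated_by_double_swaps (lift_bases n \<alpha> P) K"
proof -
  interpret lifted n \<alpha> P by unfold_locales (rule assms(2))
  have hyp: "(toric_ideal (bases P) :: (nat,'k) ypoly set) = gen_ideal (poly_ring (bases P)) (double_swap_binomials (bases P))"
    using assms(3) unfolding generated_by_double_swaps_def .
  have sub: "(toric_ideal BL :: (nat \<times> nat,'k) ypoly set) \<subseteq> gen_ideal (poly_ring BL) (double_swap_binomials BL)"
  proof (rule toric_subset_via_binomials[OF refl])
    fix a b :: "(nat \<times> nat \<Rightarrow>\<^sub>0 nat) multiset"
    assume "set_mset a \<subseteq> BL" "set_mset b \<subseteq> BL" "sum_mset a = sum_mset b"
    then have "Rel BL K a b" using main_rel[OF hyp] by blast
    then show "(mono (msmon a) - mono (msmon b) :: (nat \<times> nat,'k) ypoly) \<in> gen_ideal (poly_ring BL) (double_swap_binomials BL)"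
      unfolding Rel_def .
  qed
  show ?thesis unfolding generated_by_double_swaps_def
    using sub gen_subset_toric by (rule antisym)
qed


end
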